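(* Let $\mathcal M$ be a fully closed O*-vector space in $\mathcal L^\dagger(\mathcal D,\mathcal H)$ such that $\mathcal M'_{\rm w}\mathcal D\subset\mathcal D$, and let $E'$ be a projection in $\mathcal M'_{\rm w}$. Let $Z_{E'}$ be the projection onto $\overline{\langle\mathcal M'_{\rm w}E'\mathcal H\rangle}$ (central support of $E'$), and $\mathcal E=\langle\mathcal M'_{\rm w}E'\mathcal D\rangle\oplus(I-Z_{E'})\mathcal D\subset\mathcal D$. For $X\in(\mathcal M_{E'})''_{{\rm w}\sigma}$ define $X_e$ on $\mathcal E$ by $$X_e\Big(\sum_k C_kE'\xi_k+(I-Z_{E'})\eta\Big)=\sum_k C_kXE'\xi_k,\qquad C_k\in\mathcal M'_{\rm w},\ \xi_k,\eta\in\mathcal D,$$ and let $e(\mathcal M_{E'})=\{X_e:X\in(\mathcal M_{E'})''_{{\rm w}\sigma}\}$, an O*-vector space on $\mathcal E$. Assume that $\widehat{\mathcal D}(e(\mathcal M_{E'}))=\bigcap_{X\in(\mathcal M_{E'})''_{{\rm w}\sigma}}D(\overline{X_e})=\mathcal D$ (equivalently, the full closure of $\langle\mathcal M'_{\rm w}E'\mathcal D\rangle$ with respect to $e(\mathcal M_{E'})$ equals $Z_{E'}\mathcal D$). Then $(\mathcal M''_{{\rm w}\sigma})_{E'}=(\mathcal M_{E'})''_{{\rm w}\sigma}$.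
   Context: $\mathcal L^\dagger(\mathcal D,\mathcal H)$: linear operators $X$ with $D(X)=\mathcal D$ (dense subspace of Hilbert space $\mathcal H$), $D(X^* )\supseteq\mathcal D$, involution $X^\dagger=X^*\restriction_{\mathcal D}$. O*-vector space: $\dagger$-invariant subspace. $\widehat{\mathcal D}(\mathcal M)=\bigcap_{X\in\mathcal M}D(\overline X)$; $\mathcal M$ is fully closed if $\widehat{\mathcal D}(\mathcal M)=\mathcal D$. Weak commutant $\mathcal M'_{\rm w}=\{C\in\mathcal B(\mathcal H):\langle CX\xi,\eta\rangle=\langle C\xi,X^\dagger\eta\rangle\ \forall X\in\mathcal M,\ \xi,\eta\in\mathcal D\}$. Unbounded bicommutant $\mathcal M''_{{\rm w}\sigma}=\{X\in\mathcal L^\dagger(\mathcal D,\mathcal H):\langle CX\xi,\eta\rangle=\langle C\xi,X^\dagger\eta\rangle\ \forall C\in\mathcal M'_{\rm w},\ \xi,\eta\in\mathcal D\}$. Reduction by a projection $E'\in\mathcal M'_{\rm w}$ (with $\mathcal M'_{\rm w}\mathcal D\subset\mathcal D$): $\mathcal M_{E'}=\{X\restriction_{E'\mathcal D}:X\in\mathcal M\}$, an O*-vector space in $\mathcal L^\dagger(E'\mathcal D,E'\mathcal H)$, and similarly $(\mathcal M''_{{\rm w}\sigma})_{E'}=\{X\restriction_{E'\mathcal D}:X\in\mathcal M''_{{\rm w}\sigma}\}$; commutants of $\mathcal M_{E'}$ are taken in $E'\mathcal H$ with respect to the domain $E'\mathcal D$. $\langle\cdot\rangle$ denotes linear span. 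*)

theory Defs
  imports "HOL-Analysis.Analysis"
begin

class complex_vector = real_vector +
  fixes scaleC :: "complex \<Rightarrow> 'a \<Rightarrow> 'a"
  assumes scaleC_add_right: "scaleC a (x + y) = scaleC a x + scaleC a y"
    and scaleC_add_left: "scaleC (a + b) x = scaleC a x + scaleC b x"
    and scaleC_scaleC: "scaleC a (scaleC b x) = scaleC (a * b) x"
    and scaleC_one: "scaleC 1 x = x"
    and scaleR_scaleC: "scaleR r x = scaleC (complex_of_real r) x"

text \<open>Inner product, linear in the first and conjugate-linear in the second argument.\<close>
class complex_inner = complex_vector + real_normed_vector +
  fixes cinner :: "'a \<Rightarrow> 'a \<Rightarrow> complex"
  assumes cinner_commute: "cinner x y = cnj (cinner y x)"
    and cinner_add_left: "cinner (x + y) z = cinner x z + cinner y z"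
    and cinner_scaleC_left: "cinner (scaleC r x) y = r * cinner x y"
    and cinner_ge_zero: "Im (cinner x x) = 0 \<and> 0 \<le> Re (cinner x x)"
    and cinner_eq_zero_iff: "cinner x x = 0 \<longleftrightarrow> x = 0"
    and norm_eq_sqrt_cinner: "norm x = sqrt (Re (cinner x x))"

class chilbert_space = complex_inner + complete_space

definition csubspace :: "'h::complex_vector set \<Rightarrow> bool" where
  "csubspace S \<longleftrightarrow> 0 \<in> S \<and> (\<forall>x\<in>S. \<forall>y\<in>S. x + y \<in> S) \<and> (\<forall>a. \<forall>x\<in>S. scaleC a x \<in> S)"

definition cspan :: "'h::complex_vector set \<Rightarrow> 'h set" where
  "cspan S = {y. \<exists>(n::nat) c v. (\<forall>k<n. v k \<in> S) \<and> y = (\<Sum>k<n. scaleC (c k) (v k))}"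

text \<open>Restriction of a map to a domain; operators are represented canonically
  as maps vanishing outside their domain.\<close>
definition restr :: "'h set \<Rightarrow> ('h \<Rightarrow> 'h::complex_vector) \<Rightarrow> 'h \<Rightarrow> 'h" where
  "restr S X = (\<lambda>x. if x \<in> S then X x else 0)"

text \<open>Bounded operators on the closed subspace K (of the ambient Hilbert space),
  represented as maps vanishing outside K. For K = UNIV this is B(H).\<close>
definition Bop :: "'h::chilbert_space set \<Rightarrow> ('h \<Rightarrow> 'h) set" where
  "Bop K = {C. (\<forall>x. x \<notin> K \<longrightarrow> C x = 0) \<and> C ` K \<subseteq> K
     \<and> (\<forall>x\<in>K. \<forall>y\<in>K. C (x + y) = C x + C y)
     \<and> (\<forall>a. \<forall>x\<in>K. C (scaleC a x) = scaleC a (C x))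
     \<and> (\<exists>B. \<forall>x\<in>K. norm (C x) \<le> B * norm x)}"

definition is_proj :: "('h::chilbert_space \<Rightarrow> 'h) \<Rightarrow> bool" where
  "is_proj P \<longleftrightarrow> P \<in> Bop UNIV \<and> (\<forall>x. P (P x) = P x) \<and> (\<forall>x y. cinner (P x) y = cinner x (P y))"

text \<open>L-dagger(D,K): linear operators with domain D (dense in the Hilbert space K),
  values in K, whose adjoint domain contains D.\<close>
definition Ldag :: "'h::chilbert_space set \<Rightarrow> 'h set \<Rightarrow> ('h \<Rightarrow> 'h) set" where
  "Ldag K D = {X. (\<forall>x. x \<notin> D \<longrightarrow> X x = 0) \<and> X ` D \<subseteq> K
     \<and> (\<forall>x\<in>D. \<forall>y\<in>D. X (x + y) = X x + X y)
     \<and> (\<forall>a. \<forall>x\<in>D. X (scaleC a x) = scaleC a (X x))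
     \<and> (\<forall>\<eta>\<in>D. \<exists>z\<in>K. \<forall>\<xi>\<in>D. cinner (X \<xi>) \<eta> = cinner \<xi> z)}"

definition dag :: "'h::chilbert_space set \<Rightarrow> 'h set \<Rightarrow> ('h \<Rightarrow> 'h) \<Rightarrow> 'h \<Rightarrow> 'h" where
  "dag K D X = (\<lambda>\<eta>. if \<eta> \<in> D then (THE z. z \<in> K \<and> (\<forall>\<xi>\<in>D. cinner (X \<xi>) \<eta> = cinner \<xi> z)) else 0)"

definition Ostar_space :: "'h::chilbert_space set \<Rightarrow> 'h set \<Rightarrow> ('h \<Rightarrow> 'h) set \<Rightarrow> bool" where
  "Ostar_space K D M \<longleftrightarrow> M \<subseteq> Ldag K D \<and> M \<noteq> {}
     \<and> (\<forall>X\<in>M. \<forall>Y\<in>M. (\<lambda>x. X x + Y x) \<in> M)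
     \<and> (\<forall>a. \<forall>X\<in>M. (\<lambda>x. scaleC a (X x)) \<in> M)
     \<and> (\<forall>X\<in>M. dag K D X \<in> M)"

definition cldom :: "'h::chilbert_space set \<Rightarrow> ('h \<Rightarrow> 'h) \<Rightarrow> 'h set" where
  "cldom D X = {x. \<exists>s. (\<forall>n. s n \<in> D) \<and> s \<longlonglongrightarrow> x \<and> convergent (\<lambda>n. X (s n))}"

definition hatD :: "'h::chilbert_space set \<Rightarrow> ('h \<Rightarrow> 'h) set \<Rightarrow> 'h set" where
  "hatD D M = (\<Inter>X\<in>M. cldom D X)"

definition fully_closed :: "'h::chilbert_space set \<Rightarrow> ('h \<Rightarrow> 'h) set \<Rightarrow> bool" where
  "fully_closed D M \<longleftrightarrow> hatD D M = D"

definition wcomm :: "'h::chilbert_space set \<Rightarrow> 'h set \<Rightarrow> ('h \<Rightarrow> 'h) set \<Rightarrow> ('h \<Rightarrow> 'h) set" where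
  "wcomm K D M = {C \<in> Bop K. \<forall>X\<in>M. \<forall>\<xi>\<in>D. \<forall>\<eta>\<in>D. cinner (C (X \<xi>)) \<eta> = cinner (C \<xi>) (dag K D X \<eta>)}"

definition wsig :: "'h::chilbert_space set \<Rightarrow> 'h set \<Rightarrow> ('h \<Rightarrow> 'h) set \<Rightarrow> ('h \<Rightarrow> 'h) set" where
  "wsig K D M = {X \<in> Ldag K D. \<forall>C\<in>wcomm K D M. \<forall>\<xi>\<in>D. \<forall>\<eta>\<in>D. cinner (C (X \<xi>)) \<eta> = cinner (C \<xi>) (dag K D X \<eta>)}"

text \<open>Reduction M_{E'} = restrictions to E'D (an O*-vector space in L-dagger(E'D, E'H)).\<close>
definition reduce :: "('h::chilbert_space \<Rightarrow> 'h) \<Rightarrow> 'h set \<Rightarrow> ('h \<Rightarrow> 'h) set \<Rightarrow> ('h \<Rightarrow> 'h) set" where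
  "reduce E D M = restr (E ` D) ` M"

definition ext_dom :: "('h::chilbert_space \<Rightarrow> 'h) set \<Rightarrow> ('h \<Rightarrow> 'h) \<Rightarrow> ('h \<Rightarrow> 'h) \<Rightarrow> 'h set \<Rightarrow> 'h set" where
  "ext_dom Cm E Z D = {u + (\<eta> - Z \<eta>) | u \<eta>. u \<in> cspan {C (E \<xi>) | C \<xi>. C \<in> Cm \<and> \<xi> \<in> D} \<and> \<eta> \<in> D}"

definition ext_op :: "('h::chilbert_space \<Rightarrow> 'h) set \<Rightarrow> ('h \<Rightarrow> 'h) \<Rightarrow> ('h \<Rightarrow> 'h) \<Rightarrow> 'h set \<Rightarrow> ('h \<Rightarrow> 'h) \<Rightarrow> 'h \<Rightarrow> 'h" where
  "ext_op Cm E Z D X = restr (ext_dom Cm E Z D) (\<lambda>v. SOME w. \<exists>(n::nat) C \<xi> \<eta>.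
      (\<forall>k<n. C k \<in> Cm \<and> \<xi> k \<in> D) \<and> \<eta> \<in> D
      \<and> v = (\<Sum>k<n. C k (E (\<xi> k))) + (\<eta> - Z \<eta>)
      \<and> w = (\<Sum>k<n. C k (X (E (\<xi> k)))))"

end

theory Submission
  imports Defs
begin


lemma scaleC_zero_right[simp]: "scaleC a (0::'a::complex_vector) = 0"
proof -
  have "scaleC a 0 + scaleC a 0 = scaleC a 0 + 0" using scaleC_add_right[of a 0 0] by simp
  thus ?thesis by (rule add_left_imp_eq)
qed
lemma scaleC_zero_left[simp]: "scaleC 0 (x::'a::complex_vector) = 0"
proof -
  have "scaleC 0 x + scaleC 0 x = scaleC 0 x + 0" using scaleC_add_left[of 0 0 x] by simp
  thus ?thesis by (rule add_left_imp_eq)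
qed
lemma scaleC_minus1: "scaleC (-1) (x::'a::complex_vector) = - x"
proof -
  have "scaleR (-1) x = - x" by simp
  moreover have "scaleR (-1) x = scaleC (-1) x" using scaleR_scaleC[of "-1" x] by simp
  ultimately show ?thesis by simp
qed
lemma scaleC_minus_right: "scaleC a (- (x::'a::complex_vector)) = - scaleC a x"
proof -
  have "scaleC a (- x) = scaleC a (scaleC (-1) x)" by (simp only: scaleC_minus1)
  also have "\<dots> = scaleC (-1) (scaleC a x)" by (simp only: scaleC_scaleC mult.commute)
  also have "\<dots> = - scaleC a x" by (rule scaleC_minus1)
  finally show ?thesis .
qed
lemma scaleC_diff_right: "scaleC a ((x::'a::complex_vector) - y) = scaleC a x - scaleC a y"
  by (simp only: diff_conv_add_uminus scaleC_add_right scaleC_minus_right)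
lemma scaleC_sum_right: "scaleC a (\<Sum>k\<in>A. f k) = (\<Sum>k\<in>A. scaleC a (f k :: 'a::complex_vector))"
  by (induction A rule: infinite_finite_induct) (simp_all add: scaleC_add_right)


lemma cinner_zero_left[simp]: "cinner 0 (y::'a::complex_inner) = 0"
proof -
  have "cinner 0 y + cinner 0 y = cinner 0 y + 0" using cinner_add_left[of 0 0 y] by simp
  thus ?thesis by (rule add_left_imp_eq)
qed
lemma cinner_zero_right[simp]: "cinner (x::'a::complex_inner) 0 = 0"
  using cinner_commute[of x 0] by simp
lemma cinner_minus_left: "cinner (- (x::'a::complex_inner)) y = - cinner x y"
  using cinner_scaleC_left[of "-1" x y] by (simp add: scaleC_minus1)
lemma cinner_diff_left: "cinner ((x::'a::complex_inner) - y) z = cinner x z - cinner y z"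
  by (simp only: cinner_add_left cinner_minus_left diff_conv_add_uminus)
lemma cinner_add_right: "cinner (x::'a::complex_inner) (y + z) = cinner x y + cinner x z"
  by (subst (1 2 3) cinner_commute) (simp add: cinner_add_left)
lemma cinner_scaleC_right: "cinner (x::'a::complex_inner) (scaleC r y) = cnj r * cinner x y"
  by (subst (1 2) cinner_commute) (simp add: cinner_scaleC_left)
lemma cinner_minus_right: "cinner (x::'a::complex_inner) (- y) = - cinner x y"
  by (subst (1 2) cinner_commute) (simp add: cinner_minus_left)
lemma cinner_diff_right: "cinner (x::'a::complex_inner) (y - z) = cinner x y - cinner x z"
  by (simp only: cinner_add_right cinner_minus_right diff_conv_add_uminus)
lemma cinner_sum_left: "cinner (\<Sum>k\<in>A. f k) (y::'a::complex_inner) = (\<Sum>k\<in>A. cinner (f k) y)"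
  by (induction A rule: infinite_finite_induct) (simp_all add: cinner_add_left)
lemma cinner_sum_right: "cinner (y::'a::complex_inner) (\<Sum>k\<in>A. f k) = (\<Sum>k\<in>A. cinner y (f k))"
  by (induction A rule: infinite_finite_induct) (simp_all add: cinner_add_right)
lemma cinner_self: "cinner (x::'a::complex_inner) x = complex_of_real ((norm x)\<^sup>2)"
proof -
  have i: "Im (cinner x x) = 0" and r: "0 \<le> Re (cinner x x)" using cinner_ge_zero by auto
  have "(norm x)\<^sup>2 = Re (cinner x x)" using norm_eq_sqrt_cinner[of x] r by simp
  thus ?thesis using i by (simp add: complex_eq_iff)
qed
lemma cinner_self_zero: "cinner (x::'a::complex_inner) x = 0 \<Longrightarrow> x = 0" using cinner_eq_zero_iff by blast

lemma proj_norm: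
  fixes w m :: "'a::complex_inner"
  assumes "m \<noteq> 0"
  shows "Re (cinner (w - scaleC (cinner w m / complex_of_real ((norm m)\<^sup>2)) m) (w - scaleC (cinner w m / complex_of_real ((norm m)\<^sup>2)) m))
     = (norm w)\<^sup>2 - (cmod (cinner w m))\<^sup>2 / (norm m)\<^sup>2"
proof -
  define r where "r = (norm m)\<^sup>2"
  have r: "r > 0" using assms by (simp add: r_def)
  define c where "c = cinner w m"
  define t where "t = c / complex_of_real r"
  have cm: "cinner m w = cnj c" unfolding c_def by (rule cinner_commute)
  have "cinner (w - scaleC t m) (w - scaleC t m)
     = cinner w w - t * cinner m w - cnj t * cinner w m + t * cnj t * cinner m m"
    by (simp add: cinner_diff_left cinner_diff_right cinner_scaleC_left cinner_scaleC_right algebra_simps)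
  also have "\<dots> = complex_of_real ((norm w)\<^sup>2) - t * cnj c - cnj t * c + t * cnj t * complex_of_real r"
    by (simp add: cm c_def cinner_self r_def)
  also have "\<dots> = complex_of_real ((norm w)\<^sup>2) - c * cnj c / complex_of_real r"
    using r unfolding t_def by (simp add: field_simps)
  also have "c * cnj c = complex_of_real ((cmod c)\<^sup>2)" using complex_norm_square[of c] by (simp only: norm_complex_def)
  finally have "cinner (w - scaleC t m) (w - scaleC t m) = complex_of_real ((norm w)\<^sup>2 - (cmod c)\<^sup>2 / r)"
    by simp
  thus ?thesis unfolding t_def c_def r_def by simp
qed

lemma cauchy_schwarz: "cmod (cinner x y) \<le> norm (x::'a::complex_inner) * norm y"
proof (cases "y = 0")
  case True then show ?thesis by simp
next
  case False
  have "0 \<le> Re (cinner (x - scaleC (cinner x y / complex_of_real ((norm y)\<^sup>2)) y) (x - scaleC (cinner x y / complex_of_real ((norm y)\<^sup>2)) y))"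
    using cinner_ge_zero by blast
  hence "(cmod (cinner x y))\<^sup>2 / (norm y)\<^sup>2 \<le> (norm x)\<^sup>2" using proj_norm[OF False, of x] by simp
  hence "(cmod (cinner x y))\<^sup>2 \<le> (norm x)\<^sup>2 * (norm y)\<^sup>2" using False by (simp add: divide_le_eq)
  hence "(cmod (cinner x y))\<^sup>2 \<le> (norm x * norm y)\<^sup>2" by (simp add: power_mult_distrib)
  thus ?thesis by (simp add: power2_le_iff_abs_le)
qed


lemma tendsto_cinner_left:
  assumes "s \<longlonglongrightarrow> (x::'a::complex_inner)" shows "(\<lambda>n. cinner (s n) y) \<longlonglongrightarrow> cinner x y"
proof -
  have "(\<lambda>n. s n - x) \<longlonglongrightarrow> 0" using assms by (rule LIM_zero)
  hence "(\<lambda>n. norm (s n - x)) \<longlonglongrightarrow> 0" by (rule tendsto_norm_zero)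
  hence l: "(\<lambda>n. norm (s n - x) * norm y) \<longlonglongrightarrow> 0" by (rule tendsto_mult_left_zero)
  have b: "norm (cinner (s n) y - cinner x y) \<le> norm (s n - x) * norm y" for n
  proof -
    have "cinner (s n) y - cinner x y = cinner (s n - x) y" by (simp only: cinner_diff_left)
    thus ?thesis using cauchy_schwarz[of "s n - x" y] by (simp only: norm_complex_def)
  qed
  have "(\<lambda>n. cinner (s n) y - cinner x y) \<longlonglongrightarrow> 0"
    by (rule Lim_null_comparison[OF always_eventually l]) (rule allI, rule b)
  thus ?thesis by (rule LIM_zero_cancel)
qed

lemma tendsto_cinner_right:
  assumes "s \<longlonglongrightarrow> (x::'a::complex_inner)" shows "(\<lambda>n. cinner y (s n)) \<longlonglongrightarrow> cinner y x"
proof -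
  have "(\<lambda>n. cnj (cinner (s n) y)) \<longlonglongrightarrow> cnj (cinner x y)"
    using tendsto_cinner_left[OF assms] by (rule tendsto_cnj)
  moreover have "\<And>n. cnj (cinner (s n) y) = cinner y (s n)" "cnj (cinner x y) = cinner y x"
    by (simp_all add: cinner_commute[of y])
  ultimately show ?thesis by simp
qed

lemma orth_closure:
  assumes "\<forall>\<eta>\<in>S. cinner a \<eta> = 0" "\<eta> \<in> closure S" shows "cinner (a::'a::complex_inner) \<eta> = 0"
proof -
  obtain s where s: "\<forall>n. s n \<in> S" "s \<longlonglongrightarrow> \<eta>" using assms(2) closure_sequential by metis
  have "(\<lambda>n. cinner a (s n)) \<longlonglongrightarrow> cinner a \<eta>" using s(2) by (rule tendsto_cinner_right)
  moreover have "(\<lambda>n. cinner a (s n)) = (\<lambda>n. 0)" using s(1) assms(1) by auto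
  ultimately have "(\<lambda>n. 0) \<longlonglongrightarrow> cinner a \<eta>" by simp
  thus ?thesis using LIMSEQ_unique[OF _ tendsto_const] by blast
qed

lemma orth_closure_left:
  assumes "\<forall>\<eta>\<in>S. cinner \<eta> a = 0" "\<eta> \<in> closure S" shows "cinner \<eta> (a::'a::complex_inner) = 0"
proof -
  have "\<forall>\<eta>\<in>S. cinner a \<eta> = 0" using assms(1) by (metis cinner_commute complex_cnj_zero)
  hence "cinner a \<eta> = 0" using orth_closure assms(2) by blast
  thus ?thesis by (metis cinner_commute complex_cnj_zero)
qed

lemma dense_orth:
  assumes "closure D = UNIV" "\<forall>\<eta>\<in>D. cinner a \<eta> = 0" shows "a = (0::'a::complex_inner)"
  using orth_closure[OF assms(2), of a] assms(1) cinner_self_zero by blast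

lemma dense_eq:
  assumes "closure D = UNIV" "\<forall>\<eta>\<in>D. cinner a \<eta> = cinner b \<eta>" shows "a = (b::'a::complex_inner)"
  using dense_orth[OF assms(1), of "a - b"] assms(2) by (simp add: cinner_diff_left)

lemma ext_eq: "(\<forall>x. cinner x a = cinner x b) \<Longrightarrow> a = (b::'a::complex_inner)"
proof -
  assume "\<forall>x. cinner x a = cinner x b"
  hence "cinner (a - b) (a - b) = 0" by (simp add: cinner_diff_right)
  hence "a - b = 0" by (rule cinner_self_zero)
  thus ?thesis by simp
qed
lemma ext_eq_left: "(\<forall>x. cinner a x = cinner b x) \<Longrightarrow> a = (b::'a::complex_inner)"
proof -
  assume "\<forall>x. cinner a x = cinner b x"
  hence "cinner (a - b) (a - b) = 0" by (simp add: cinner_diff_left)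
  hence "a - b = 0" by (rule cinner_self_zero)
  thus ?thesis by simp
qed


lemma Bop_UNIV_iff: "C \<in> Bop UNIV \<longleftrightarrow> (\<forall>x y. C (x + y) = C x + C y) \<and> (\<forall>a x. C (scaleC a x) = scaleC a (C x))
     \<and> (\<exists>B. \<forall>x. norm (C x) \<le> B * norm x)"
  unfolding Bop_def by auto

lemma Bop_add: "C \<in> Bop K \<Longrightarrow> x \<in> K \<Longrightarrow> y \<in> K \<Longrightarrow> C (x + y) = C x + C y"
  unfolding Bop_def by blast
lemma Bop_scaleC: "C \<in> Bop K \<Longrightarrow> x \<in> K \<Longrightarrow> C (scaleC a x) = scaleC a (C x)"
  unfolding Bop_def by blast
lemma Bop_out: "C \<in> Bop K \<Longrightarrow> x \<notin> K \<Longrightarrow> C x = 0"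
  unfolding Bop_def by blast
lemma Bop_into: "C \<in> Bop K \<Longrightarrow> x \<in> K \<Longrightarrow> C x \<in> K"
  unfolding Bop_def by blast
lemma Bop_bound: "C \<in> Bop K \<Longrightarrow> \<exists>B. \<forall>x\<in>K. norm (C x) \<le> B * norm x"
  unfolding Bop_def by blast

lemma BopU_zero[simp]: "C \<in> Bop UNIV \<Longrightarrow> C 0 = 0"
  using Bop_scaleC[of C UNIV 0 0] by simp
lemma BopU_minus: "C \<in> Bop UNIV \<Longrightarrow> C (- x) = - C x"
  using Bop_scaleC[of C UNIV x "-1"] by (simp add: scaleC_minus1)
lemma BopU_diff: "C \<in> Bop UNIV \<Longrightarrow> C (x - y) = C x - C y"
  using Bop_add[of C UNIV x "- y"] BopU_minus[of C y] by simp
lemma BopU_sum: "C \<in> Bop UNIV \<Longrightarrow> C (\<Sum>k\<in>A. f k) = (\<Sum>k\<in>A. C (f k))"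
  by (induction A rule: infinite_finite_induct) (auto simp: Bop_add)

lemma BopU_tendsto:
  assumes "C \<in> Bop UNIV" "s \<longlonglongrightarrow> x" shows "(\<lambda>n. C (s n)) \<longlonglongrightarrow> C x"
proof -
  obtain B where B: "\<forall>x\<in>UNIV. norm (C x) \<le> B * norm x" using Bop_bound[OF assms(1)] by blast
  have "(\<lambda>n. s n - x) \<longlonglongrightarrow> 0" using assms(2) by (rule LIM_zero)
  hence "(\<lambda>n. norm (s n - x)) \<longlonglongrightarrow> 0" by (rule tendsto_norm_zero)
  hence l: "(\<lambda>n. B * norm (s n - x)) \<longlonglongrightarrow> 0" by (rule tendsto_mult_right_zero)
  have b: "norm (C (s n) - C x) \<le> B * norm (s n - x)" for n
  proof -
    have "C (s n) - C x = C (s n - x)" using BopU_diff[OF assms(1)] by metis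
    thus ?thesis using B by simp
  qed
  have "(\<lambda>n. C (s n) - C x) \<longlonglongrightarrow> 0"
    by (rule Lim_null_comparison[OF always_eventually l]) (rule allI, rule b)
  thus ?thesis by (rule LIM_zero_cancel)
qed

lemma BopU_comp: "C \<in> Bop UNIV \<Longrightarrow> C' \<in> Bop UNIV \<Longrightarrow> (\<lambda>x. C (C' x)) \<in> Bop UNIV"
proof -
  assume a: "C \<in> Bop UNIV" "C' \<in> Bop UNIV"
  obtain B where B: "\<forall>x. norm (C x) \<le> B * norm x" using Bop_bound[OF a(1)] by auto
  obtain B' where B': "\<forall>x. norm (C' x) \<le> B' * norm x" using Bop_bound[OF a(2)] by auto


  show ?thesis unfolding Bop_UNIV_iff
  proof (intro conjI allI exI)
    fix x show "norm (C (C' x)) \<le> (max B 0 * max B' 0) * norm x"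
    proof -
      have "norm (C (C' x)) \<le> B * norm (C' x)" using B by auto
      also have "\<dots> \<le> max B 0 * norm (C' x)" by (simp add: mult_right_mono)
      also have "\<dots> \<le> max B 0 * (B' * norm x)" using B' by (simp add: mult_left_mono)
      also have "\<dots> \<le> max B 0 * (max B' 0 * norm x)" by (simp add: mult_left_mono mult_right_mono)
      finally show ?thesis by (simp add: mult.assoc)
    qed
  qed (use a in \<open>auto simp: Bop_add Bop_scaleC\<close>)
qed


lemma parallelogram: "(norm ((a::'a::complex_inner)+b))\<^sup>2 + (norm (a-b))\<^sup>2 = 2*(norm a)\<^sup>2 + 2*(norm b)\<^sup>2"
proof -
  have "cinner (a+b) (a+b) + cinner (a-b) (a-b) = 2 * cinner a a + 2 * cinner b b"
    by (simp add: cinner_add_left cinner_add_right cinner_diff_left cinner_diff_right)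
  thus ?thesis unfolding cinner_self
    by (metis (mono_tags, lifting) of_real_add of_real_eq_iff of_real_mult of_real_numeral)
qed
lemma norm_sq_Re: "(norm (x::'a::complex_inner))\<^sup>2 = Re (cinner x x)" by (simp add: cinner_self)

lemma scaleR_as_scaleC: "scaleR r x = scaleC (complex_of_real r) x" by (rule scaleR_scaleC)

lemma riesz:
  fixes f :: "'a::chilbert_space \<Rightarrow> complex"
  assumes add: "\<forall>x y. f (x+y) = f x + f y" and hom: "\<forall>a x. f (scaleC a x) = a * f x"
    and bnd: "\<exists>B. \<forall>x. cmod (f x) \<le> B * norm x"
  shows "\<exists>z. \<forall>x. f x = cinner x z"
proof (cases "\<forall>x. f x = 0")
  case True then show ?thesis by (intro exI[of _ 0]) simp
next
  case False
  then obtain x0 where fx0: "f x0 \<noteq> 0" by auto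
  have fminus: "f (- y) = - f y" for y using hom[rule_format, of "-1" y] by (simp add: scaleC_minus1)
  have fdiff: "f (x - y) = f x - f y" for x y using add fminus by (metis diff_conv_add_uminus)
  have fzero: "f 0 = 0" using hom[rule_format, of 0 0] by simp
  have fscaleR: "f (scaleR r x) = complex_of_real r * f x" for r x using hom scaleR_as_scaleC by metis
  obtain B where B: "\<forall>x. cmod (f x) \<le> B * norm x" using bnd by auto
  have fcont: "(\<lambda>n. f (s n)) \<longlonglongrightarrow> f x" if "s \<longlonglongrightarrow> x" for s x
  proof -
    have "(\<lambda>n. s n - x) \<longlonglongrightarrow> 0" using that by (rule LIM_zero)
    hence "(\<lambda>n. norm (s n - x)) \<longlonglongrightarrow> 0" by (rule tendsto_norm_zero)
    hence l: "(\<lambda>n. B * norm (s n - x)) \<longlonglongrightarrow> 0" by (rule tendsto_mult_right_zero)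
    have b: "norm (f (s n) - f x) \<le> B * norm (s n - x)" for n
    proof -
      have "f (s n) - f x = f (s n - x)" by (simp only: fdiff)
      thus ?thesis using B by (simp only: norm_complex_def)
    qed
    have "(\<lambda>n. f (s n) - f x) \<longlonglongrightarrow> 0"
      by (rule Lim_null_comparison[OF always_eventually l]) (rule allI, rule b)
    thus ?thesis by (rule LIM_zero_cancel)
  qed
  define N where "N = {x. f x = 0}"
  define d where "d = Inf ((\<lambda>n. norm (x0 - n)) ` N)"
  have N0: "0 \<in> N" using fzero by (simp add: N_def)
  have bdd: "bdd_below ((\<lambda>n. norm (x0 - n)) ` N)" by (rule bdd_belowI[of _ 0]) auto
  have ne: "(\<lambda>n. norm (x0 - n)) ` N \<noteq> {}" using N0 by auto
  have dle: "d \<le> norm (x0 - n)" if "n \<in> N" for n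
    unfolding d_def using bdd that by (simp add: cInf_lower)
  have d0: "d \<ge> 0" unfolding d_def using ne by (intro cInf_greatest) auto
  have "\<forall>k. \<exists>n\<in>N. norm (x0 - n) < d + inverse (real (Suc k))"
  proof
    fix k
    have "d < d + inverse (real (Suc k))" by simp
    hence "Inf ((\<lambda>n. norm (x0 - n)) ` N) < d + inverse (real (Suc k))" unfolding d_def .
    then obtain y where "y \<in> (\<lambda>n. norm (x0 - n)) ` N" "y < d + inverse (real (Suc k))"
      using cInf_lessD[OF ne] by blast
    then show "\<exists>n\<in>N. norm (x0 - n) < d + inverse (real (Suc k))" by blast
  qed
  then obtain nk where nk: "\<And>k. nk k \<in> N" "\<And>k. norm (x0 - nk k) < d + inverse (real (Suc k))"
    by metis
  define e where "e k = inverse (real (Suc k))" for k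
  have e0: "0 < e k" "e k \<le> 1" for k unfolding e_def by (auto simp: field_simps)
  have est: "(norm (nk j - nk k))\<^sup>2 \<le> (4*d+2) * (e j + e k)" for j k
  proof -
    define a where "a = x0 - nk j"
    define b where "b = x0 - nk k"
    define m where "m = scaleR (1/2) (nk j + nk k)"
    have mN: "m \<in> N" using nk(1)[of j] nk(1)[of k] unfolding m_def N_def by (simp add: fscaleR add)
    have "a + b = scaleR 2 (x0 - m)" unfolding a_def b_def m_def by (simp add: algebra_simps scaleR_2)
    hence nab: "norm (a + b) = 2 * norm (x0 - m)" by simp
    have "2 * d \<le> norm (a + b)" using nab dle[OF mN] by simp
    hence "(2*d)\<^sup>2 \<le> (norm (a+b))\<^sup>2" by (rule power_mono) (use d0 in simp)
    moreover have "(norm (a - b))\<^sup>2 = (norm (nk k - nk j))\<^sup>2" unfolding a_def b_def by simp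
    moreover have "norm a \<le> d + e j" "norm b \<le> d + e k" using nk(2) unfolding a_def b_def e_def
      by (auto intro: less_imp_le)
    hence "(norm a)\<^sup>2 \<le> (d + e j)\<^sup>2" "(norm b)\<^sup>2 \<le> (d + e k)\<^sup>2" by (auto simp: power_mono)
    ultimately have "(norm (nk k - nk j))\<^sup>2 \<le> 2*(d + e j)\<^sup>2 + 2*(d + e k)\<^sup>2 - (2*d)\<^sup>2"
      using parallelogram[of a b] by linarith
    also have "\<dots> = 4*d*e j + 2*(e j)\<^sup>2 + 4*d*e k + 2*(e k)\<^sup>2" by (simp add: power2_eq_square algebra_simps)
    also have "\<dots> \<le> (4*d+2) * (e j + e k)"
    proof -
      have "(e j)\<^sup>2 \<le> e j" "(e k)\<^sup>2 \<le> e k" using e0 by (auto simp: power2_eq_square mult_le_cancel_left1)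
      thus ?thesis by (simp add: algebra_simps)
    qed
    finally show ?thesis by (simp add: norm_minus_commute)
  qed
  have "Cauchy nk"
  proof (rule metric_CauchyI)
    fix eps :: real assume eps: "eps > 0"
    obtain K where K: "inverse (real (Suc K)) < eps\<^sup>2 / (2*(4*d+2))"
      using reals_Archimedean[of "eps\<^sup>2 / (2*(4*d+2))"] eps d0 by (auto simp: field_simps)
    show "\<exists>M. \<forall>m\<ge>M. \<forall>n\<ge>M. dist (nk m) (nk n) < eps"
    proof (intro exI allI impI)
      fix j k assume jk: "K \<le> j" "K \<le> k"
      have "e j \<le> inverse (real (Suc K))" "e k \<le> inverse (real (Suc K))" unfolding e_def using jk
        by (auto simp: field_simps)
      hence "(4*d+2) * (e j + e k) \<le> (4*d+2) * (2 * inverse (real (Suc K)))"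
        using d0 by (intro mult_left_mono) auto
      also have "\<dots> < (4*d+2) * (2 * (eps\<^sup>2 / (2*(4*d+2))))" using K d0 by (intro mult_strict_left_mono) auto
      also have "\<dots> = eps\<^sup>2" using d0 by (simp add: field_simps)
      finally have "(norm (nk j - nk k))\<^sup>2 < eps\<^sup>2" using est[of j k] by linarith
      hence "norm (nk j - nk k) < eps" by (rule power_less_imp_less_base) (use eps in simp)
      thus "dist (nk j) (nk k) < eps" by (simp add: dist_norm)
    qed
  qed
  hence "convergent nk" by (rule Cauchy_convergent)
  then obtain ns where ns: "nk \<longlonglongrightarrow> ns" unfolding convergent_def by blast
  have nsN: "ns \<in> N"
  proof -
    have "(\<lambda>k. f (nk k)) \<longlonglongrightarrow> f ns" using fcont[OF ns] .
    moreover have "(\<lambda>k. f (nk k)) = (\<lambda>k. 0)" using nk(1) by (auto simp: N_def)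
    ultimately have "(\<lambda>k. 0) \<longlonglongrightarrow> f ns" by simp
    hence "f ns = 0" using LIMSEQ_unique[OF _ tendsto_const] by blast
    thus ?thesis by (simp add: N_def)
  qed
  define w where "w = x0 - ns"
  have nw: "norm w = d"
  proof (rule antisym)
    show "d \<le> norm w" unfolding w_def using dle[OF nsN] .
    have l1: "(\<lambda>k. norm (x0 - nk k)) \<longlonglongrightarrow> norm w" unfolding w_def
      by (rule tendsto_norm[OF tendsto_diff[OF tendsto_const ns]])
    have l2: "(\<lambda>k. d + inverse (real (Suc k))) \<longlonglongrightarrow> d + 0"
      by (rule tendsto_add[OF tendsto_const LIMSEQ_inverse_real_of_nat])
    have "norm w \<le> d + 0"
      by (rule LIMSEQ_le[OF l1 l2]) (rule exI[of _ 0], rule allI, rule impI, rule less_imp_le, rule nk(2))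
    thus "norm w \<le> d" by simp
  qed
  have fw: "f w = f x0" using nsN unfolding w_def N_def by (simp add: fdiff)
  hence w0: "w \<noteq> 0" using fx0 fzero by auto
  have orth: "cinner w m = 0" if mN: "m \<in> N" for m
  proof (cases "m = 0")
    case True then show ?thesis by simp
  next
    case False
    define t where "t = cinner w m / complex_of_real ((norm m)\<^sup>2)"
    have "ns + scaleC t m \<in> N" using nsN mN unfolding N_def by (simp add: add hom)
    hence "d \<le> norm (x0 - (ns + scaleC t m))" by (rule dle)
    also have "x0 - (ns + scaleC t m) = w - scaleC t m" unfolding w_def by simp
    finally have "norm w \<le> norm (w - scaleC t m)" using nw by simp
    hence "(norm w)\<^sup>2 \<le> (norm (w - scaleC t m))\<^sup>2" by (rule power_mono) simp
    also have "\<dots> = Re (cinner (w - scaleC t m) (w - scaleC t m))" by (rule norm_sq_Re)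
    also have "\<dots> = (norm w)\<^sup>2 - (cmod (cinner w m))\<^sup>2 / (norm m)\<^sup>2"
      unfolding t_def by (rule proj_norm[OF False])
    finally have "(cmod (cinner w m))\<^sup>2 / (norm m)\<^sup>2 \<le> 0" by simp
    hence "(cmod (cinner w m))\<^sup>2 \<le> 0" using False by (simp add: divide_le_0_iff)
    thus ?thesis by simp
  qed
  have ww: "cinner w w \<noteq> 0" using w0 cinner_eq_zero_iff by blast
  have wwr: "cnj (cinner w w) = cinner w w" by (metis cinner_commute)
  show ?thesis
  proof (intro exI allI)
    fix x
    have "scaleC (f x) w - scaleC (f w) x \<in> N" unfolding N_def by (simp add: fdiff hom)
    hence "cinner w (scaleC (f x) w - scaleC (f w) x) = 0" by (rule orth)
    hence "cinner (scaleC (f x) w - scaleC (f w) x) w = 0" by (metis cinner_commute complex_cnj_zero)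
    hence eq: "f x * cinner w w = f w * cinner x w" by (simp add: cinner_diff_left cinner_scaleC_left)
    have "cinner x (scaleC (cnj (f w) / cinner w w) w) = f w / cnj (cinner w w) * cinner x w"
      by (simp add: cinner_scaleC_right)
    also have "\<dots> = f x" using eq ww wwr by (simp add: field_simps)
    finally show "f x = cinner x (scaleC (cnj (f w) / cinner w w) w)" by simp
  qed
qed

definition adj :: "('a::chilbert_space \<Rightarrow> 'a) \<Rightarrow> 'a \<Rightarrow> 'a" where
  "adj C y = (SOME z. \<forall>x. cinner (C x) y = cinner x z)"

lemma adj: assumes "C \<in> Bop UNIV" shows "cinner (C x) y = cinner x (adj C y)"
proof -
  obtain B where B: "\<forall>x. norm (C x) \<le> B * norm x" using Bop_bound[OF assms] by auto
  have "\<exists>z. \<forall>x. cinner (C x) y = cinner x z"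
  proof (rule riesz)
    show "\<forall>x x'. cinner (C (x + x')) y = cinner (C x) y + cinner (C x') y"
      using assms by (simp add: Bop_add cinner_add_left)
    show "\<forall>a x. cinner (C (scaleC a x)) y = a * cinner (C x) y"
      using assms by (simp add: Bop_scaleC cinner_scaleC_left)
    show "\<exists>B. \<forall>x. cmod (cinner (C x) y) \<le> B * norm x"
    proof (intro exI allI)
      fix x
      have "cmod (cinner (C x) y) \<le> norm (C x) * norm y" by (rule cauchy_schwarz)
      also have "\<dots> \<le> (B * norm x) * norm y" using B by (simp add: mult_right_mono)
      finally show "cmod (cinner (C x) y) \<le> (B * norm y) * norm x" by (simp add: algebra_simps)
    qed
  qed
  then show ?thesis unfolding adj_def by (rule someI_ex[where P="\<lambda>z. \<forall>x. cinner (C x) y = cinner x z", THEN spec])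
qed

lemma adj_left: assumes "C \<in> Bop UNIV" shows "cinner (adj C y) x = cinner y (C x)"
  by (metis adj assms cinner_commute)

lemma adj_Bop: assumes "C \<in> Bop UNIV" shows "adj C \<in> Bop UNIV"
proof -
  obtain B where B: "\<forall>x. norm (C x) \<le> B * norm x" using Bop_bound[OF assms] by auto
  have "norm (adj C y) \<le> max B 0 * norm y" for y
  proof (cases "adj C y = 0")
    case True then show ?thesis by simp
  next
    case False
    have "(norm (adj C y))\<^sup>2 = Re (cinner (C (adj C y)) y)" by (simp add: adj[OF assms] norm_sq_Re)
    also have "\<dots> \<le> cmod (cinner (C (adj C y)) y)" by (rule complex_Re_le_cmod)
    also have "\<dots> \<le> norm (C (adj C y)) * norm y" by (rule cauchy_schwarz)
    also have "\<dots> \<le> (max B 0 * norm (adj C y)) * norm y"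
      using B[rule_format, of "adj C y"] by (intro mult_right_mono) (auto intro: order_trans[OF _ mult_right_mono])
    finally have "norm (adj C y) * norm (adj C y) \<le> (max B 0 * norm y) * norm (adj C y)"
      by (simp add: power2_eq_square algebra_simps)
    thus ?thesis using False by simp
  qed
  moreover have "adj C (x + y) = adj C x + adj C y" for x y
    by (rule ext_eq) (simp add: adj[OF assms, symmetric] cinner_add_right)
  moreover have "adj C (scaleC a x) = scaleC a (adj C x)" for a x
    by (rule ext_eq) (simp add: adj[OF assms, symmetric] cinner_scaleC_right)
  ultimately show ?thesis unfolding Bop_UNIV_iff by blast
qed

lemma adj_adj: assumes "C \<in> Bop UNIV" shows "adj (adj C) = C"
proof
  fix y show "adj (adj C) y = C y"
    by (rule ext_eq) (metis adj adj_Bop adj_left assms)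
qed


definition dense_in :: "'h::complex_inner set \<Rightarrow> 'h set \<Rightarrow> bool" where
  "dense_in K D \<longleftrightarrow> (\<forall>z1\<in>K. \<forall>z2\<in>K. (\<forall>\<xi>\<in>D. cinner \<xi> z1 = cinner \<xi> z2) \<longrightarrow> z1 = z2)"

lemma Ldag_out: "X \<in> Ldag K D \<Longrightarrow> x \<notin> D \<Longrightarrow> X x = 0" unfolding Ldag_def by blast
lemma Ldag_into: "X \<in> Ldag K D \<Longrightarrow> x \<in> D \<Longrightarrow> X x \<in> K" unfolding Ldag_def by blast
lemma Ldag_add: "X \<in> Ldag K D \<Longrightarrow> x \<in> D \<Longrightarrow> y \<in> D \<Longrightarrow> X (x + y) = X x + X y" unfolding Ldag_def by blast
lemma Ldag_scaleC: "X \<in> Ldag K D \<Longrightarrow> x \<in> D \<Longrightarrow> X (scaleC a x) = scaleC a (X x)" unfolding Ldag_def by blast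
lemma Ldag_adj: "X \<in> Ldag K D \<Longrightarrow> \<eta> \<in> D \<Longrightarrow> \<exists>z\<in>K. \<forall>\<xi>\<in>D. cinner (X \<xi>) \<eta> = cinner \<xi> z"
  unfolding Ldag_def by blast
lemma LdagI:
  assumes "\<forall>x. x \<notin> D \<longrightarrow> X x = 0" "\<forall>x\<in>D. X x \<in> K" "\<forall>x\<in>D. \<forall>y\<in>D. X (x + y) = X x + X y"
    "\<forall>a. \<forall>x\<in>D. X (scaleC a x) = scaleC a (X x)" "\<forall>\<eta>\<in>D. \<exists>z\<in>K. \<forall>\<xi>\<in>D. cinner (X \<xi>) \<eta> = cinner \<xi> z"
  shows "X \<in> Ldag K D"
  unfolding Ldag_def using assms by blast

lemma dag_out: "\<eta> \<notin> D \<Longrightarrow> dag K D X \<eta> = 0" unfolding dag_def by simp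

lemma dag_unique:
  assumes "dense_in K D" "\<eta> \<in> D" "z \<in> K" "\<forall>\<xi>\<in>D. cinner (X \<xi>) \<eta> = cinner \<xi> z"
  shows "dag K D X \<eta> = z"
proof -
  have "(THE z. z \<in> K \<and> (\<forall>\<xi>\<in>D. cinner (X \<xi>) \<eta> = cinner \<xi> z)) = z"
  proof (rule the_equality)
    show "z \<in> K \<and> (\<forall>\<xi>\<in>D. cinner (X \<xi>) \<eta> = cinner \<xi> z)" using assms by blast
    fix z' assume z': "z' \<in> K \<and> (\<forall>\<xi>\<in>D. cinner (X \<xi>) \<eta> = cinner \<xi> z')"
    hence "\<forall>\<xi>\<in>D. cinner \<xi> z' = cinner \<xi> z" using assms(4) by auto
    thus "z' = z" using assms(1,3) z' unfolding dense_in_def by blast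
  qed
  thus ?thesis unfolding dag_def using assms(2) by simp
qed

lemma dag_prop:
  assumes "X \<in> Ldag K D" "dense_in K D" "\<eta> \<in> D"
  shows "dag K D X \<eta> \<in> K" "\<forall>\<xi>\<in>D. cinner (X \<xi>) \<eta> = cinner \<xi> (dag K D X \<eta>)"
proof -
  obtain z where z: "z \<in> K" "\<forall>\<xi>\<in>D. cinner (X \<xi>) \<eta> = cinner \<xi> z" using Ldag_adj[OF assms(1,3)] by blast
  have "dag K D X \<eta> = z" by (rule dag_unique[OF assms(2,3) z])
  thus "dag K D X \<eta> \<in> K" "\<forall>\<xi>\<in>D. cinner (X \<xi>) \<eta> = cinner \<xi> (dag K D X \<eta>)" using z by auto
qed

lemma csubspace_add: "csubspace S \<Longrightarrow> x \<in> S \<Longrightarrow> y \<in> S \<Longrightarrow> x + y \<in> S" unfolding csubspace_def by blast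
lemma csubspace_scaleC: "csubspace S \<Longrightarrow> x \<in> S \<Longrightarrow> scaleC a x \<in> S" unfolding csubspace_def by blast
lemma csubspace_zero: "csubspace S \<Longrightarrow> 0 \<in> S" unfolding csubspace_def by blast
lemma csubspace_minus: "csubspace S \<Longrightarrow> x \<in> S \<Longrightarrow> - x \<in> S"
  using csubspace_scaleC[of S x "-1"] by (simp add: scaleC_minus1)
lemma csubspace_diff: "csubspace S \<Longrightarrow> x \<in> S \<Longrightarrow> y \<in> S \<Longrightarrow> x - y \<in> S"
  using csubspace_add[of S x "- y"] csubspace_minus[of S y] by simp

lemma dag_Ldag:
  assumes X: "X \<in> Ldag K D" and dn: "dense_in K D" and sK: "csubspace K" and sD: "csubspace D"
  shows "dag K D X \<in> Ldag K D"
proof (rule LdagI)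
  show "\<forall>x. x \<notin> D \<longrightarrow> dag K D X x = 0" by (simp add: dag_out)
  show "\<forall>x\<in>D. dag K D X x \<in> K" using dag_prop(1)[OF X dn] by blast
  show "\<forall>x\<in>D. \<forall>y\<in>D. dag K D X (x + y) = dag K D X x + dag K D X y"
  proof (intro ballI)
    fix x y assume xy: "x \<in> D" "y \<in> D"
    show "dag K D X (x + y) = dag K D X x + dag K D X y"
    proof (rule dag_unique[OF dn])
      show "x + y \<in> D" using sD xy by (rule csubspace_add)
      show "dag K D X x + dag K D X y \<in> K" using sK dag_prop(1)[OF X dn] xy by (blast intro: csubspace_add)
      show "\<forall>\<xi>\<in>D. cinner (X \<xi>) (x + y) = cinner \<xi> (dag K D X x + dag K D X y)"
        using dag_prop(2)[OF X dn] xy by (simp add: cinner_add_right)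
    qed
  qed
  show "\<forall>a. \<forall>x\<in>D. dag K D X (scaleC a x) = scaleC a (dag K D X x)"
  proof (intro allI ballI)
    fix a x assume x: "x \<in> D"
    show "dag K D X (scaleC a x) = scaleC a (dag K D X x)"
    proof (rule dag_unique[OF dn])
      show "scaleC a x \<in> D" using sD x by (rule csubspace_scaleC)
      show "scaleC a (dag K D X x) \<in> K" using sK dag_prop(1)[OF X dn x] by (rule csubspace_scaleC)
      show "\<forall>\<xi>\<in>D. cinner (X \<xi>) (scaleC a x) = cinner \<xi> (scaleC a (dag K D X x))"
        using dag_prop(2)[OF X dn x] by (simp add: cinner_scaleC_right)
    qed
  qed
  show "\<forall>\<eta>\<in>D. \<exists>z\<in>K. \<forall>\<xi>\<in>D. cinner (dag K D X \<xi>) \<eta> = cinner \<xi> z"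
  proof (intro ballI bexI)
    fix \<eta> \<xi> assume e: "\<eta> \<in> D" and x: "\<xi> \<in> D"
    have "cinner (X \<eta>) \<xi> = cinner \<eta> (dag K D X \<xi>)" using dag_prop(2)[OF X dn x] e by blast
    thus "cinner (dag K D X \<xi>) \<eta> = cinner \<xi> (X \<eta>)"
      by (metis cinner_commute)
  next
    fix \<eta> assume "\<eta> \<in> D" thus "X \<eta> \<in> K" using X Ldag_into by blast
  qed
qed

lemma dag_dag:
  assumes X: "X \<in> Ldag K D" and dn: "dense_in K D"
  shows "dag K D (dag K D X) = X"
proof
  fix \<eta> show "dag K D (dag K D X) \<eta> = X \<eta>"
  proof (cases "\<eta> \<in> D")
    case True
    show ?thesis
    proof (rule dag_unique[OF dn True])
      show "X \<eta> \<in> K" using X True by (rule Ldag_into)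
      show "\<forall>\<xi>\<in>D. cinner (dag K D X \<xi>) \<eta> = cinner \<xi> (X \<eta>)"
      proof
        fix \<xi> assume x: "\<xi> \<in> D"
        have "cinner (X \<eta>) \<xi> = cinner \<eta> (dag K D X \<xi>)" using dag_prop(2)[OF X dn x] True by blast
        thus "cinner (dag K D X \<xi>) \<eta> = cinner \<xi> (X \<eta>)" by (metis cinner_commute)
      qed
    qed
  next
    case False then show ?thesis using dag_out Ldag_out[OF X] by metis
  qed
qed

lemma dense_eq_right:
  assumes "closure D = UNIV" "\<forall>\<xi>\<in>D. cinner \<xi> a = cinner \<xi> b" shows "a = (b::'a::complex_inner)"
proof (rule dense_eq[OF assms(1)])
  show "\<forall>\<eta>\<in>D. cinner a \<eta> = cinner b \<eta>"
  proof
    fix \<eta> assume "\<eta> \<in> D"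
    hence "cnj (cinner \<eta> a) = cnj (cinner \<eta> b)" using assms(2) by simp
    thus "cinner a \<eta> = cinner b \<eta>" by (metis cinner_commute)
  qed
qed

lemma restr_in: "x \<in> S \<Longrightarrow> restr S X x = X x" unfolding restr_def by simp
lemma restr_out: "x \<notin> S \<Longrightarrow> restr S X x = 0" unfolding restr_def by simp

lemma proj_Bop: "is_proj P \<Longrightarrow> P \<in> Bop UNIV" unfolding is_proj_def by blast
lemma proj_idem: "is_proj P \<Longrightarrow> P (P x) = P x" unfolding is_proj_def by blast
lemma proj_sa: "is_proj P \<Longrightarrow> cinner (P x) y = cinner x (P y)" unfolding is_proj_def by blast
lemma proj_range: "is_proj P \<Longrightarrow> x \<in> range P \<longleftrightarrow> P x = x"
  using proj_idem by (metis rangeE rangeI)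


locale lctx =
  fixes D :: "'h::chilbert_space set"
    and M :: "('h \<Rightarrow> 'h) set"
    and E Z :: "'h \<Rightarrow> 'h"
  assumes D_subspace: "csubspace D"
    and D_dense: "closure D = UNIV"
    and M_Ostar: "Ostar_space UNIV D M"
    and comm_inv: "\<forall>C\<in>wcomm UNIV D M. C ` D \<subseteq> D"
    and E_comm: "E \<in> wcomm UNIV D M"
    and E_proj: "is_proj E"
    and Z_proj: "is_proj Z"
    and Z_range: "range Z = closure (cspan {C (E x) | C x. C \<in> wcomm UNIV D M})"
    and ext_full: "(\<Inter>X\<in>wsig (range E) (E ` D) (reduce E D M).
         cldom (ext_dom (wcomm UNIV D M) E Z D) (ext_op (wcomm UNIV D M) E Z D X)) = D"
begin

abbreviation "W \<equiv> wcomm UNIV D M"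
abbreviation "KE \<equiv> range E"
abbreviation "DE \<equiv> E ` D"
abbreviation "RM \<equiv> reduce E D M"
abbreviation "RW \<equiv> wcomm KE DE RM"
abbreviation "RS \<equiv> wsig KE DE RM"
abbreviation "SS \<equiv> {C (E x) | C x. C \<in> W}"
abbreviation "dg \<equiv> dag UNIV D"
abbreviation "rdg \<equiv> dag KE DE"

lemma E_Bop: "E \<in> Bop UNIV" using E_proj by (rule proj_Bop)
lemma Z_Bop: "Z \<in> Bop UNIV" using Z_proj by (rule proj_Bop)
lemma EE[simp]: "E (E x) = E x" using E_proj by (rule proj_idem)
lemma ZZ[simp]: "Z (Z x) = Z x" using Z_proj by (rule proj_idem)
lemma Esa: "cinner (E x) y = cinner x (E y)" using E_proj by (rule proj_sa)
lemma Zsa: "cinner (Z x) y = cinner x (Z y)" using Z_proj by (rule proj_sa)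
lemma KE_iff: "x \<in> KE \<longleftrightarrow> E x = x" using E_proj by (rule proj_range)
lemma rZ_iff: "x \<in> range Z \<longleftrightarrow> Z x = x" using Z_proj by (rule proj_range)

lemma KE_sub: "csubspace KE"
  unfolding csubspace_def KE_iff using E_Bop by (simp add: Bop_add Bop_scaleC)
lemma rZ_sub: "csubspace (range Z)"
  unfolding csubspace_def rZ_iff using Z_Bop by (simp add: Bop_add Bop_scaleC)
lemma rZ_closed: "closed (range Z)" unfolding Z_range by simp

lemma rZ_sum: "(\<forall>k\<in>A. f k \<in> range Z) \<Longrightarrow> (\<Sum>k\<in>A. f k) \<in> range Z"
  by (induction A rule: infinite_finite_induct)
     (simp_all add: csubspace_zero[OF rZ_sub] csubspace_add[OF rZ_sub])

lemma W_Bop: "C \<in> W \<Longrightarrow> C \<in> Bop UNIV" unfolding wcomm_def by blast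
lemma W_cond: "C \<in> W \<Longrightarrow> X \<in> M \<Longrightarrow> \<xi> \<in> D \<Longrightarrow> \<eta> \<in> D \<Longrightarrow> cinner (C (X \<xi>)) \<eta> = cinner (C \<xi>) (dg X \<eta>)"
  unfolding wcomm_def by blast
lemma W_D: "C \<in> W \<Longrightarrow> \<xi> \<in> D \<Longrightarrow> C \<xi> \<in> D" using comm_inv by blast
lemma W_intro: "C \<in> Bop UNIV \<Longrightarrow> (\<And>X \<xi> \<eta>. X \<in> M \<Longrightarrow> \<xi> \<in> D \<Longrightarrow> \<eta> \<in> D \<Longrightarrow> cinner (C (X \<xi>)) \<eta> = cinner (C \<xi>) (dg X \<eta>)) \<Longrightarrow> C \<in> W"
  unfolding wcomm_def by blast

lemma M_Ldag: "X \<in> M \<Longrightarrow> X \<in> Ldag UNIV D" using M_Ostar unfolding Ostar_space_def by blast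
lemma M_dag: "X \<in> M \<Longrightarrow> dg X \<in> M" using M_Ostar unfolding Ostar_space_def by blast

lemma denseU: "dense_in UNIV D"
  unfolding dense_in_def using dense_eq_right[OF D_dense] by blast

lemma dgP: "X \<in> M \<Longrightarrow> \<xi> \<in> D \<Longrightarrow> \<eta> \<in> D \<Longrightarrow> cinner (X \<xi>) \<eta> = cinner \<xi> (dg X \<eta>)"
  using dag_prop(2)[OF M_Ldag denseU] by blast

lemma dg_dg: "X \<in> M \<Longrightarrow> dg (dg X) = X" using dag_dag[OF M_Ldag denseU] .

lemma W_comm: assumes "C \<in> W" "X \<in> M" "\<xi> \<in> D" shows "C (X \<xi>) = X (C \<xi>)"
proof (rule dense_eq[OF D_dense], rule ballI)
  fix \<eta> assume e: "\<eta> \<in> D"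
  have "cinner (C (X \<xi>)) \<eta> = cinner (C \<xi>) (dg X \<eta>)" using W_cond assms e by blast
  also have "\<dots> = cinner (X (C \<xi>)) \<eta>" using dgP[OF assms(2) W_D[OF assms(1,3)] e] by simp
  finally show "cinner (C (X \<xi>)) \<eta> = cinner (X (C \<xi>)) \<eta>" .
qed

lemma DE_sub_D: "DE \<subseteq> D" using comm_inv E_comm by blast
lemma DE_sub_KE: "DE \<subseteq> KE" by auto
lemma DE_sub: "csubspace DE"
proof -
  have "0 \<in> DE" using csubspace_zero[OF D_subspace] BopU_zero[OF E_Bop] by (metis image_eqI)
  moreover have "x + y \<in> DE" if xy: "x \<in> DE" "y \<in> DE" for x y
  proof -
    obtain a b where "a \<in> D" "b \<in> D" "x = E a" "y = E b" using xy by blast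
    thus ?thesis using Bop_add[OF E_Bop, of a b] csubspace_add[OF D_subspace] by (metis UNIV_I image_eqI)
  qed
  moreover have "scaleC c x \<in> DE" if xx: "x \<in> DE" for x c
  proof -
    obtain a where "a \<in> D" "x = E a" using xx by blast
    thus ?thesis using Bop_scaleC[OF E_Bop, of a c] csubspace_scaleC[OF D_subspace] by (metis UNIV_I image_eqI)
  qed
  ultimately show ?thesis unfolding csubspace_def by blast
qed

lemma denseE: "dense_in KE DE"
  unfolding dense_in_def
proof (intro ballI impI)
  fix z1 z2 assume z: "z1 \<in> KE" "z2 \<in> KE" and h: "\<forall>\<xi>\<in>DE. cinner \<xi> z1 = cinner \<xi> z2"
  have "\<forall>x\<in>D. cinner x z1 = cinner x z2"
  proof
    fix x assume x: "x \<in> D"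
    have "cinner x z1 = cinner x (E z1)" using z(1) KE_iff by simp
    also have "\<dots> = cinner (E x) z1" by (simp add: Esa)
    also have "\<dots> = cinner (E x) z2" using h x by blast
    also have "\<dots> = cinner x (E z2)" by (simp add: Esa)
    also have "\<dots> = cinner x z2" using z(2) KE_iff by simp
    finally show "cinner x z1 = cinner x z2" .
  qed
  thus "z1 = z2" using dense_eq_right[OF D_dense] by blast
qed

lemma M_E: "X \<in> M \<Longrightarrow> \<xi> \<in> D \<Longrightarrow> E (X \<xi>) = X (E \<xi>)" using W_comm[OF E_comm] by blast

lemma D_tendsto: "\<exists>s. (\<forall>n. s n \<in> D) \<and> s \<longlonglongrightarrow> x"
  using D_dense closure_sequential by (metis UNIV_I)

lemma W_id: "(\<lambda>x. x) \<in> W"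
proof (rule W_intro)
  show "(\<lambda>x. x) \<in> Bop UNIV" unfolding Bop_UNIV_iff by (auto intro: exI[of _ 1])
  fix X \<xi> \<eta> assume "X \<in> M" "\<xi> \<in> D" "\<eta> \<in> D"
  thus "cinner (X \<xi>) \<eta> = cinner \<xi> (dg X \<eta>)" by (rule dgP)
qed

lemma W_comp: assumes "C \<in> W" "C' \<in> W" shows "(\<lambda>x. C (C' x)) \<in> W"
proof (rule W_intro)
  show "(\<lambda>x. C (C' x)) \<in> Bop UNIV" using BopU_comp W_Bop assms by blast
  fix X \<xi> \<eta> assume X: "X \<in> M" and x: "\<xi> \<in> D" and e: "\<eta> \<in> D"
  have "C (C' (X \<xi>)) = C (X (C' \<xi>))" using W_comm[OF assms(2) X x] by simp
  thus "cinner (C (C' (X \<xi>))) \<eta> = cinner (C (C' \<xi>)) (dg X \<eta>)"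
    using W_cond[OF assms(1) X W_D[OF assms(2) x] e] by simp
qed

lemma norm_scaleC: "norm (scaleC a (x::'a::complex_inner)) = cmod a * norm x"
proof -
  have "cinner (scaleC a x) (scaleC a x) = cnj a * (a * cinner x x)"
    by (simp only: cinner_scaleC_left cinner_scaleC_right)
  also have "\<dots> = (a * cnj a) * cinner x x" by (simp add: ac_simps)
  also have "\<dots> = complex_of_real ((cmod a)\<^sup>2) * complex_of_real ((norm x)\<^sup>2)"
    by (simp only: complex_norm_square[symmetric] cinner_self)
  also have "\<dots> = complex_of_real ((cmod a * norm x)\<^sup>2)" by (simp add: power_mult_distrib)
  finally have "(norm (scaleC a x))\<^sup>2 = (cmod a * norm x)\<^sup>2"
    unfolding cinner_self of_real_eq_iff .
  thus ?thesis by (simp add: power2_eq_iff_nonneg)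
qed

lemma W_scale: assumes "C \<in> W" shows "(\<lambda>x. scaleC a (C x)) \<in> W"
proof (rule W_intro)
  obtain B where B: "\<forall>x\<in>UNIV. norm (C x) \<le> B * norm x" using Bop_bound[OF W_Bop[OF assms]] by blast
  have C: "C \<in> Bop UNIV" using W_Bop[OF assms] .
  show "(\<lambda>x. scaleC a (C x)) \<in> Bop UNIV" unfolding Bop_UNIV_iff
  proof (intro conjI allI exI)
    fix x show "norm (scaleC a (C x)) \<le> (cmod a * B) * norm x"
      using B mult_left_mono[of "norm (C x)" "B * norm x" "cmod a"] by (simp add: norm_scaleC mult.assoc)
  qed (use C in \<open>simp_all add: Bop_add Bop_scaleC scaleC_add_right scaleC_scaleC mult.commute\<close>)
  fix X \<xi> \<eta> assume X: "X \<in> M" and x: "\<xi> \<in> D" and e: "\<eta> \<in> D"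
  show "cinner (scaleC a (C (X \<xi>))) \<eta> = cinner (scaleC a (C \<xi>)) (dg X \<eta>)"
    using W_cond[OF assms X x e] by (simp add: cinner_scaleC_left)
qed

lemma W_adj: assumes "C \<in> W" shows "adj C \<in> W"
proof (rule W_intro)
  have C: "C \<in> Bop UNIV" using W_Bop[OF assms] .
  show "adj C \<in> Bop UNIV" using C by (rule adj_Bop)
  fix X \<xi> \<eta> assume X: "X \<in> M" and x: "\<xi> \<in> D" and e: "\<eta> \<in> D"
  have "cinner (adj C (X \<xi>)) \<eta> = cinner (X \<xi>) (C \<eta>)" using adj_left[OF C] by blast
  also have "\<dots> = cnj (cinner (C \<eta>) (X \<xi>))" by (rule cinner_commute)
  also have "cinner (C \<eta>) (X \<xi>) = cinner (C \<eta>) (dg (dg X) \<xi>)" using dg_dg[OF X] by simp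
  also have "\<dots> = cinner (C (dg X \<eta>)) \<xi>" using W_cond[OF assms M_dag[OF X] e x] by simp
  also have "cnj \<dots> = cinner \<xi> (C (dg X \<eta>))" by (simp add: cinner_commute[of \<xi>])
  also have "\<dots> = cinner (adj C \<xi>) (dg X \<eta>)" using adj_left[OF C] by simp
  finally show "cinner (adj C (X \<xi>)) \<eta> = cinner (adj C \<xi>) (dg X \<eta>)" .
qed

lemma cspan_elim: "y \<in> cspan S \<Longrightarrow> \<exists>(n::nat) c v. (\<forall>k<n. v k \<in> S) \<and> y = (\<Sum>k<n. scaleC (c k) (v k))"
  by (simp add: cspan_def)
lemma cspan_intro: "\<forall>k<(n::nat). v k \<in> S \<Longrightarrow> (\<Sum>k<n. scaleC (c k) (v k)) \<in> cspan S"
  unfolding cspan_def by blast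
lemma cspan_base: "x \<in> S \<Longrightarrow> x \<in> cspan S"
  using cspan_intro[of 1 "\<lambda>_. x" S "\<lambda>_. 1"] by (simp add: scaleC_one)

lemma SS_I: "C \<in> W \<Longrightarrow> C (E x) \<in> SS" by blast

lemma SS_rZ: "C \<in> W \<Longrightarrow> C (E x) \<in> range Z"
  unfolding Z_range by (rule subsetD[OF closure_subset], rule cspan_base) blast

lemma orthZ: "p \<in> range Z \<Longrightarrow> cinner p (q - Z q) = 0"
proof -
  assume "p \<in> range Z"
  hence "cinner p (q - Z q) = cinner (Z p) (q - Z q)" using rZ_iff by simp
  also have "\<dots> = cinner p (Z (q - Z q))" by (rule Zsa)
  also have "Z (q - Z q) = 0" using BopU_diff[OF Z_Bop] by simp
  finally show ?thesis by simp
qed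
lemma orthZ': "p \<in> range Z \<Longrightarrow> cinner (q - Z q) p = 0"
  using orthZ by (metis cinner_commute complex_cnj_zero)

lemma DS:
  assumes p: "p \<in> range Z" and h: "\<forall>C\<in>W. \<forall>x\<in>D. cinner p (C (E x)) = 0"
  shows "p = 0"
proof -
  have h1: "cinner p (C (E x)) = 0" if C: "C \<in> W" for C x
  proof -
    obtain s where s: "\<forall>n. s n \<in> D" "s \<longlonglongrightarrow> x" using D_tendsto by blast
    have "(\<lambda>n. C (E (s n))) \<longlonglongrightarrow> C (E x)"
      by (rule BopU_tendsto[OF W_Bop[OF C] BopU_tendsto[OF E_Bop s(2)]])
    hence "(\<lambda>n. cinner p (C (E (s n)))) \<longlonglongrightarrow> cinner p (C (E x))" by (rule tendsto_cinner_right)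
    moreover have "(\<lambda>n. cinner p (C (E (s n)))) = (\<lambda>n. 0)" using h s(1) C by simp
    ultimately have "(\<lambda>n. 0) \<longlonglongrightarrow> cinner p (C (E x))" by simp
    thus ?thesis using LIMSEQ_unique[OF _ tendsto_const] by metis
  qed
  have h2: "\<forall>y\<in>cspan SS. cinner p y = 0"
  proof
    fix y assume "y \<in> cspan SS"
    then obtain n :: nat and c v where v: "\<forall>k<n. v k \<in> SS" "y = (\<Sum>k<n. scaleC (c k) (v k))" by (blast dest: cspan_elim)
    have "cinner p y = (\<Sum>k<n. cnj (c k) * cinner p (v k))" using v(2) by (simp add: cinner_sum_right cinner_scaleC_right)
    also have "\<dots> = 0" using v(1) h1 by (intro sum.neutral) auto
    finally show "cinner p y = 0" .
  qed
  have "cinner p p = 0" using orth_closure[OF h2] p unfolding Z_range by blast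
  thus ?thesis by (rule cinner_self_zero)
qed

lemma Z_inv: assumes C: "C \<in> W" and p: "p \<in> range Z" shows "C p \<in> range Z"
proof -
  have CB: "C \<in> Bop UNIV" using W_Bop[OF C] .
  have sp: "C y \<in> cspan SS" if yy: "y \<in> cspan SS" for y
  proof -
    obtain n :: nat and c v where v: "\<forall>k<n. v k \<in> SS" "y = (\<Sum>k<n. scaleC (c k) (v k))" using cspan_elim[OF yy] by blast
    have "C y = (\<Sum>k<n. scaleC (c k) (C (v k)))" using v(2) by (simp add: BopU_sum[OF CB] Bop_scaleC[OF CB])
    moreover have "\<forall>k<n. C (v k) \<in> SS"
    proof (intro allI impI)
      fix k assume "k < n"
      then obtain C' x where C': "C' \<in> W" "v k = C' (E x)" using v(1) by blast
      have "(\<lambda>z. C (C' z)) \<in> W" by (rule W_comp[OF C C'(1)])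
      from SS_I[OF this, of x] show "C (v k) \<in> SS" using C'(2) by simp
    qed
    ultimately show ?thesis using cspan_intro[of n "\<lambda>k. C (v k)" SS c] by simp
  qed
  obtain s where s: "\<forall>n. s n \<in> cspan SS" "s \<longlonglongrightarrow> p" using p unfolding Z_range closure_sequential by blast
  have "(\<lambda>n. C (s n)) \<longlonglongrightarrow> C p" by (rule BopU_tendsto[OF CB s(2)])
  moreover have "\<forall>n. C (s n) \<in> cspan SS" using s(1) sp by blast
  ultimately have "\<exists>x. (\<forall>n. x n \<in> cspan SS) \<and> x \<longlonglongrightarrow> C p" by (intro exI[of _ "\<lambda>n. C (s n)"]) simp
  thus ?thesis unfolding Z_range closure_sequential .
qed

lemma Z_comm: assumes C: "C \<in> W" shows "Z (C x) = C (Z x)"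
proof (rule ext_eq_left, rule allI)
  fix y
  have CB: "C \<in> Bop UNIV" using W_Bop[OF C] .
  have A: "adj C \<in> W" using W_adj[OF C] .
  have 1: "Z (adj C (Z y)) = adj C (Z y)" using Z_inv[OF A] rZ_iff by blast
  have 2: "Z (C (Z x)) = C (Z x)" using Z_inv[OF C] rZ_iff by blast
  have "cinner (Z (C x)) y = cinner (C x) (Z y)" by (rule Zsa)
  also have "\<dots> = cinner x (adj C (Z y))" by (rule adj[OF CB])
  also have "\<dots> = cinner x (Z (adj C (Z y)))" using 1 by simp
  also have "\<dots> = cinner (Z x) (adj C (Z y))" by (simp add: Zsa)
  also have "\<dots> = cinner (C (Z x)) (Z y)" by (simp add: adj[OF CB])
  also have "\<dots> = cinner (Z (C (Z x))) y" by (simp add: Zsa)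
  also have "\<dots> = cinner (C (Z x)) y" using 2 by simp
  finally show "cinner (Z (C x)) y = cinner (C (Z x)) y" .
qed

end


context lctx begin

lemma RLdag:
  assumes X: "X \<in> Ldag UNIV D" and XE: "\<forall>\<xi>\<in>D. E (X \<xi>) = X (E \<xi>)"
  shows "restr DE X \<in> Ldag KE DE" "\<forall>b\<in>DE. rdg (restr DE X) b = E (dg X b)"
proof -
  have XK: "X a \<in> KE" if a: "a \<in> DE" for a
  proof -
    obtain \<xi> where x: "\<xi> \<in> D" "a = E \<xi>" using a by blast
    have "X a = E (X \<xi>)" using XE x by simp
    hence "E (X a) = X a" by simp
    thus ?thesis using KE_iff by blast
  qed
  have adjr: "cinner (restr DE X a) b = cinner a (E (dg X b))" if a: "a \<in> DE" and b: "b \<in> DE" for a b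
  proof -
    have aD: "a \<in> D" "b \<in> D" using a b DE_sub_D by auto
    have "cinner (restr DE X a) b = cinner (X a) b" using a by (simp add: restr_in)
    also have "\<dots> = cinner a (dg X b)" using dag_prop(2)[OF X denseU aD(2)] aD(1) by blast
    also have "\<dots> = cinner (E a) (dg X b)" using a KE_iff by auto
    also have "\<dots> = cinner a (E (dg X b))" by (rule Esa)
    finally show ?thesis .
  qed
  show L: "restr DE X \<in> Ldag KE DE"
  proof (rule LdagI)
    show "\<forall>x. x \<notin> DE \<longrightarrow> restr DE X x = 0" by (simp add: restr_out)
    show "\<forall>x\<in>DE. restr DE X x \<in> KE" using XK by (simp add: restr_in)
    show "\<forall>x\<in>DE. \<forall>y\<in>DE. restr DE X (x + y) = restr DE X x + restr DE X y"
      using Ldag_add[OF X] DE_sub_D csubspace_add[OF DE_sub] by (auto simp: restr_in)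
    show "\<forall>a. \<forall>x\<in>DE. restr DE X (scaleC a x) = scaleC a (restr DE X x)"
      using Ldag_scaleC[OF X] DE_sub_D csubspace_scaleC[OF DE_sub] by (auto simp: restr_in)
    show "\<forall>\<eta>\<in>DE. \<exists>z\<in>KE. \<forall>\<xi>\<in>DE. cinner (restr DE X \<xi>) \<eta> = cinner \<xi> z"
      using adjr by blast
  qed
  show "\<forall>b\<in>DE. rdg (restr DE X) b = E (dg X b)"
    using dag_unique[OF denseE] adjr by blast
qed

lemma RM_dag: assumes X: "X \<in> M" and b: "b \<in> DE"
  shows "rdg (restr DE X) b = dg X b" "dg X b \<in> KE" "restr DE X \<in> Ldag KE DE"
proof -
  have XE: "\<forall>\<xi>\<in>D. E (X \<xi>) = X (E \<xi>)" using M_E[OF X] by blast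
  have "rdg (restr DE X) b = E (dg X b)" using RLdag(2)[OF M_Ldag[OF X] XE] b by blast
  also have "E (dg X b) = dg X (E b)" using M_E[OF M_dag[OF X]] b DE_sub_D by blast
  also have "E b = b" using b KE_iff by auto
  finally show "rdg (restr DE X) b = dg X b" .
  have "E (dg X b) = dg X b" using M_E[OF M_dag[OF X]] b DE_sub_D KE_iff by auto
  thus "dg X b \<in> KE" using KE_iff by blast
  show "restr DE X \<in> Ldag KE DE" using RLdag(1)[OF M_Ldag[OF X] XE] .
qed

lemma RM_XK: assumes X: "X \<in> M" and a: "a \<in> DE" shows "X a \<in> KE"
proof -
  obtain \<xi> where x: "\<xi> \<in> D" "a = E \<xi>" using a by blast
  have "X a = E (X \<xi>)" using M_E[OF X x(1)] x(2) by simp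
  thus ?thesis by simp
qed

lemma RM_cases: "Y \<in> RM \<Longrightarrow> (\<And>X. X \<in> M \<Longrightarrow> Y = restr DE X \<Longrightarrow> P) \<Longrightarrow> P"
  unfolding reduce_def by blast
lemma RM_I: "X \<in> M \<Longrightarrow> restr DE X \<in> RM" unfolding reduce_def by blast

lemma RW_Bop: "B \<in> RW \<Longrightarrow> B \<in> Bop KE" unfolding wcomm_def by blast
lemma RW_cond: "B \<in> RW \<Longrightarrow> Y \<in> RM \<Longrightarrow> a \<in> DE \<Longrightarrow> b \<in> DE \<Longrightarrow> cinner (B (Y a)) b = cinner (B a) (rdg Y b)"
  unfolding wcomm_def by blast
lemma RW_intro: "B \<in> Bop KE \<Longrightarrow> (\<And>X a b. X \<in> M \<Longrightarrow> a \<in> DE \<Longrightarrow> b \<in> DE \<Longrightarrow> cinner (B (X a)) b = cinner (B a) (dg X b)) \<Longrightarrow> B \<in> RW"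
  unfolding wcomm_def
proof (intro CollectI conjI ballI)
  fix Y a b assume B: "B \<in> Bop KE" and h: "\<And>X a b. X \<in> M \<Longrightarrow> a \<in> DE \<Longrightarrow> b \<in> DE \<Longrightarrow> cinner (B (X a)) b = cinner (B a) (dg X b)"
    and Y: "Y \<in> RM" and a: "a \<in> DE" and b: "b \<in> DE"
  obtain X where X: "X \<in> M" "Y = restr DE X" using Y by (rule RM_cases)
  show "cinner (B (Y a)) b = cinner (B a) (rdg Y b)"
    using h[OF X(1) a b] X RM_dag(1)[OF X(1) b] a by (simp add: restr_in)
qed (simp)

lemma RS_Ldag: "T \<in> RS \<Longrightarrow> T \<in> Ldag KE DE" unfolding wsig_def by blast
lemma RS_cond: "T \<in> RS \<Longrightarrow> B \<in> RW \<Longrightarrow> a \<in> DE \<Longrightarrow> b \<in> DE \<Longrightarrow> cinner (B (T a)) b = cinner (B a) (rdg T b)"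
  unfolding wsig_def by blast

lemma restrK_Bop: assumes F: "F \<in> Bop UNIV" and FK: "\<forall>x. F x \<in> KE" shows "restr KE F \<in> Bop KE"
proof -
  obtain B where B: "\<forall>x\<in>UNIV. norm (F x) \<le> B * norm x" using Bop_bound[OF F] by blast
  show ?thesis unfolding Bop_def
  proof (intro CollectI conjI allI ballI impI exI)
    show "restr KE F ` KE \<subseteq> KE" using FK by (auto simp: restr_in)
    fix x assume "x \<in> KE" thus "norm (restr KE F x) \<le> B * norm x" using B by (simp add: restr_in)
  next
    fix x y assume "x \<in> KE" "y \<in> KE"
    thus "restr KE F (x + y) = restr KE F x + restr KE F y"
      using csubspace_add[OF KE_sub] Bop_add[OF F] by (simp add: restr_in)
  next
    fix a x assume "x \<in> KE"
    thus "restr KE F (scaleC a x) = scaleC a (restr KE F x)"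
      using csubspace_scaleC[OF KE_sub] Bop_scaleC[OF F] by (simp add: restr_in)
  qed (simp add: restr_out)
qed

lemma rdgP: "T \<in> RS \<Longrightarrow> a \<in> DE \<Longrightarrow> b \<in> DE \<Longrightarrow> cinner (T a) b = cinner a (rdg T b)"
  using dag_prop(2)[OF RS_Ldag denseE] by blast
lemma rdgK: "T \<in> RS \<Longrightarrow> b \<in> DE \<Longrightarrow> rdg T b \<in> KE"
  using dag_prop(1)[OF RS_Ldag denseE] by blast
lemma RS_K: "T \<in> RS \<Longrightarrow> a \<in> DE \<Longrightarrow> T a \<in> KE" using RS_Ldag Ldag_into by blast

lemma innerK: assumes "k \<in> KE" shows "cinner k y = cinner k (E y)"
proof -
  have "cinner k y = cinner (E k) y" using assms KE_iff by simp
  also have "\<dots> = cinner k (E y)" by (rule Esa)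
  finally show ?thesis .
qed
lemma innerK': assumes "k \<in> KE" shows "cinner y k = cinner (E y) k"
proof -
  have "cinner y k = cinner y (E k)" using assms KE_iff by simp
  also have "\<dots> = cinner (E y) k" by (rule Esa[symmetric])
  finally show ?thesis .
qed

lemma IP:
  assumes T: "T \<in> RS" and C: "C \<in> W" and C': "C' \<in> W" and x: "\<xi> \<in> D" and z: "\<zeta> \<in> D"
  shows "cinner (C (T (E \<xi>))) (C' (E \<zeta>)) = cinner (C (E \<xi>)) (C' (rdg T (E \<zeta>)))"
proof -
  have CB: "C \<in> Bop UNIV" and CB': "C' \<in> Bop UNIV" using W_Bop C C' by auto
  define F where "F = (\<lambda>x. E (adj C' (C x)))"
  have FB: "F \<in> Bop UNIV" unfolding F_def by (rule BopU_comp[OF E_Bop BopU_comp[OF adj_Bop[OF CB'] CB]])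
  have FK: "\<forall>x. F x \<in> KE" unfolding F_def by simp
  define B where "B = restr KE F"
  have key: "cinner (B k) b = cinner (C k) (C' b)" if k: "k \<in> KE" and b: "b \<in> KE" for k b
  proof -
    have "cinner (B k) b = cinner (E (adj C' (C k))) b" using k by (simp add: B_def F_def restr_in)
    also have "\<dots> = cinner (adj C' (C k)) b" by (rule innerK'[OF b, symmetric])
    also have "\<dots> = cinner (C k) (C' b)" by (rule adj_left[OF CB'])
    finally show ?thesis .
  qed
  have key2: "cinner (B k) b = cinner (C k) (C' b)" if k: "k \<in> KE" and b: "b \<in> DE" for k b
    using key[OF k] b by auto
  have BRW: "B \<in> RW"
  proof (rule RW_intro)
    show "B \<in> Bop KE" unfolding B_def by (rule restrK_Bop[OF FB FK])
    fix X a b assume X: "X \<in> M" and a: "a \<in> DE" and b: "b \<in> DE"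
    have aD: "a \<in> D" and bD: "b \<in> D" using a b DE_sub_D by auto
    have "cinner (B (X a)) b = cinner (C (X a)) (C' b)" using key2[OF RM_XK[OF X a] b] .
    also have "\<dots> = cinner (X (C a)) (C' b)" using W_comm[OF C X aD] by simp
    also have "\<dots> = cinner (C a) (dg X (C' b))" using dgP[OF X W_D[OF C aD] W_D[OF C' bD]] .
    also have "\<dots> = cinner (C a) (C' (dg X b))" using W_comm[OF C' M_dag[OF X] bD] by simp
    also have "\<dots> = cinner (B a) (dg X b)"
      using key[OF _ RM_dag(2)[OF X b]] a by auto
    finally show "cinner (B (X a)) b = cinner (B a) (dg X b)" .
  qed
  have a: "E \<xi> \<in> DE" and b: "E \<zeta> \<in> DE" using x z by auto
  have "cinner (C (T (E \<xi>))) (C' (E \<zeta>)) = cinner (B (T (E \<xi>))) (E \<zeta>)"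
    using key2[OF RS_K[OF T a] b] by simp
  also have "\<dots> = cinner (B (E \<xi>)) (rdg T (E \<zeta>))" by (rule RS_cond[OF T BRW a b])
  also have "\<dots> = cinner (C (E \<xi>)) (C' (rdg T (E \<zeta>)))" using key[OF _ rdgK[OF T b]] by simp
  finally show ?thesis .
qed

lemma RS_dag: assumes T: "T \<in> RS" shows "rdg T \<in> RS"
proof -
  have TL: "T \<in> Ldag KE DE" using RS_Ldag[OF T] .
  have L: "rdg T \<in> Ldag KE DE" by (rule dag_Ldag[OF TL denseE KE_sub DE_sub])
  have dd: "rdg (rdg T) = T" by (rule dag_dag[OF TL denseE])
  have cond: "cinner (B (rdg T a)) b = cinner (B a) (T b)" if B: "B \<in> RW" and a: "a \<in> DE" and b: "b \<in> DE" for B a b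
  proof -
    have BB: "B \<in> Bop KE" using RW_Bop[OF B] .
    define G where "G = (\<lambda>x. B (E x))"
    obtain c where c: "\<forall>x\<in>KE. norm (B x) \<le> c * norm x" using Bop_bound[OF BB] by blast
    obtain e where e: "\<forall>x\<in>UNIV. norm (E x) \<le> e * norm x" using Bop_bound[OF E_Bop] by blast
    have GB: "G \<in> Bop UNIV" unfolding Bop_UNIV_iff
    proof (intro conjI allI exI)
      fix x y show "G (x + y) = G x + G y" unfolding G_def
        using Bop_add[OF BB] Bop_add[OF E_Bop] by simp
    next
      fix a x show "G (scaleC a x) = scaleC a (G x)" unfolding G_def
        using Bop_scaleC[OF BB] Bop_scaleC[OF E_Bop] by simp
    next
      fix x
      have "norm (G x) \<le> c * norm (E x)" unfolding G_def using c by simp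
      also have "\<dots> \<le> max c 0 * norm (E x)" by (intro mult_right_mono) auto
      also have "\<dots> \<le> max c 0 * (e * norm x)" using e by (intro mult_left_mono) auto
      finally show "norm (G x) \<le> (max c 0 * e) * norm x" by (simp add: mult.assoc)
    qed
    define B' where "B' = restr KE (adj G)"
    have adjK: "adj G y \<in> KE" for y
    proof -
      have "adj G y = E (adj G y)"
      proof (rule ext_eq, rule allI)
        fix x
        have "cinner x (adj G y) = cinner (G x) y" by (simp add: adj[OF GB])
        also have "\<dots> = cinner (G (E x)) y" by (simp add: G_def)
        also have "\<dots> = cinner (E x) (adj G y)" by (simp add: adj[OF GB])
        also have "\<dots> = cinner x (E (adj G y))" by (rule Esa)
        finally show "cinner x (adj G y) = cinner x (E (adj G y))" .
      qed
      thus ?thesis using KE_iff by metis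
    qed
    have B'B: "B' \<in> Bop KE" unfolding B'_def by (rule restrK_Bop[OF adj_Bop[OF GB]]) (use adjK in blast)
    have BB': "cinner (B x) y = cinner x (B' y)" if "x \<in> KE" "y \<in> KE" for x y
    proof -
      have "cinner (B x) y = cinner (G x) y" using that KE_iff by (simp add: G_def)
      also have "\<dots> = cinner x (adj G y)" by (rule adj[OF GB])
      finally show ?thesis using that by (simp add: B'_def restr_in)
    qed
    have B'B2: "cinner (B' x) y = cinner x (B y)" if "x \<in> KE" "y \<in> KE" for x y
      using BB'[OF that(2,1)] by (metis cinner_commute)
    have B'RW: "B' \<in> RW"
    proof (rule RW_intro[OF B'B])
      fix X a b assume X: "X \<in> M" and a: "a \<in> DE" and b: "b \<in> DE"
      have bD: "b \<in> D" using b DE_sub_D by auto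
      have aK: "a \<in> KE" and bK: "b \<in> KE" using a b by auto
      have XaK: "X a \<in> KE" by (rule RM_XK[OF X a])
      have Xa: "X a = rdg (restr DE (dg X)) a" using RM_dag(1)[OF M_dag[OF X] a] dg_dg[OF X] by simp
      have rb: "restr DE (dg X) b = dg X b" using b by (simp add: restr_in)
      have "cinner (B' (X a)) b = cinner (X a) (B b)" by (rule B'B2[OF XaK bK])
      also have "\<dots> = cnj (cinner (B b) (X a))" by (rule cinner_commute)
      also have "\<dots> = cnj (cinner (B b) (rdg (restr DE (dg X)) a))" using Xa by simp
      also have "\<dots> = cnj (cinner (B (restr DE (dg X) b)) a)"
        using RW_cond[OF B RM_I[OF M_dag[OF X]] b a] by simp
      also have "\<dots> = cnj (cinner (B (dg X b)) a)" using rb by simp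
      also have "\<dots> = cinner a (B (dg X b))" by (simp add: cinner_commute[of a])
      also have "\<dots> = cinner (B' a) (dg X b)" using B'B2[OF aK RM_dag(2)[OF X b]] by simp
      finally show "cinner (B' (X a)) b = cinner (B' a) (dg X b)" .
    qed
    have aK: "a \<in> KE" and bK: "b \<in> KE" using a b by auto
    have "cinner (B (rdg T a)) b = cinner (rdg T a) (B' b)" using BB'[OF rdgK[OF T a] bK] .
    also have "\<dots> = cnj (cinner (B' b) (rdg T a))" by (rule cinner_commute)
    also have "cinner (B' b) (rdg T a) = cinner (B' (T b)) a" using RS_cond[OF T B'RW b a] by simp
    also have "cnj \<dots> = cinner a (B' (T b))" by (simp add: cinner_commute[of a])
    also have "\<dots> = cinner (B a) (T b)" using BB'[OF aK RS_K[OF T b]] by simp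
    finally show ?thesis .
  qed
  show ?thesis unfolding wsig_def using L cond dd by auto
qed

lemma dir1: assumes X: "X \<in> wsig UNIV D M" shows "restr DE X \<in> RS"
proof -
  have XL: "X \<in> Ldag UNIV D" using X unfolding wsig_def by blast
  have Xc: "\<And>C \<xi> \<eta>. C \<in> W \<Longrightarrow> \<xi> \<in> D \<Longrightarrow> \<eta> \<in> D \<Longrightarrow> cinner (C (X \<xi>)) \<eta> = cinner (C \<xi>) (dg X \<eta>)"
    using X unfolding wsig_def by blast
  have XE: "\<forall>\<xi>\<in>D. E (X \<xi>) = X (E \<xi>)"
  proof
    fix \<xi> assume x: "\<xi> \<in> D"
    show "E (X \<xi>) = X (E \<xi>)"
    proof (rule dense_eq[OF D_dense], rule ballI)
      fix \<eta> assume e: "\<eta> \<in> D"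
      have "cinner (E (X \<xi>)) \<eta> = cinner (E \<xi>) (dg X \<eta>)" by (rule Xc[OF E_comm x e])
      also have "\<dots> = cinner (X (E \<xi>)) \<eta>" using dag_prop(2)[OF XL denseU e] W_D[OF E_comm x] by simp
      finally show "cinner (E (X \<xi>)) \<eta> = cinner (X (E \<xi>)) \<eta>" .
    qed
  qed
  note R = RLdag[OF XL XE]
  have "cinner (B (restr DE X a)) b = cinner (B a) (rdg (restr DE X) b)"
    if B: "B \<in> RW" and a: "a \<in> DE" and b: "b \<in> DE" for B a b
  proof -
    have BB: "B \<in> Bop KE" using RW_Bop[OF B] .
    define G where "G = (\<lambda>x. B (E x))"
    obtain c where c: "\<forall>x\<in>KE. norm (B x) \<le> c * norm x" using Bop_bound[OF BB] by blast
    obtain e where e: "\<forall>x\<in>UNIV. norm (E x) \<le> e * norm x" using Bop_bound[OF E_Bop] by blast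
    have GB: "G \<in> Bop UNIV" unfolding Bop_UNIV_iff
    proof (intro conjI allI exI)
      fix x y show "G (x + y) = G x + G y" unfolding G_def
        using Bop_add[OF BB] Bop_add[OF E_Bop] by simp
    next
      fix a x show "G (scaleC a x) = scaleC a (G x)" unfolding G_def
        using Bop_scaleC[OF BB] Bop_scaleC[OF E_Bop] by simp
    next
      fix x
      have "norm (G x) \<le> c * norm (E x)" unfolding G_def using c by simp
      also have "\<dots> \<le> max c 0 * norm (E x)" by (intro mult_right_mono) auto
      also have "\<dots> \<le> max c 0 * (e * norm x)" using e by (intro mult_left_mono) auto
      finally show "norm (G x) \<le> (max c 0 * e) * norm x" by (simp add: mult.assoc)
    qed
    have BK: "B k \<in> KE" if "k \<in> KE" for k using Bop_into[OF BB that] .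
    have GW: "G \<in> W"
    proof (rule W_intro[OF GB])
      fix Y \<xi> \<eta> assume Y: "Y \<in> M" and x: "\<xi> \<in> D" and e: "\<eta> \<in> D"
      have Ex: "E \<xi> \<in> DE" and Ee: "E \<eta> \<in> DE" using x e by auto
      have "cinner (G (Y \<xi>)) \<eta> = cinner (B (restr DE Y (E \<xi>))) \<eta>"
        using M_E[OF Y x] Ex by (simp add: G_def restr_in)
      also have "\<dots> = cinner (B (restr DE Y (E \<xi>))) (E \<eta>)"
        using innerK[OF BK[OF Ldag_into[OF RM_dag(3)[OF Y Ee] Ex]]] .
      also have "\<dots> = cinner (B (E \<xi>)) (rdg (restr DE Y) (E \<eta>))" by (rule RW_cond[OF B RM_I[OF Y] Ex Ee])
      also have "\<dots> = cinner (B (E \<xi>)) (dg Y (E \<eta>))" using RM_dag(1)[OF Y Ee] by simp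
      also have "dg Y (E \<eta>) = E (dg Y \<eta>)" using M_E[OF M_dag[OF Y] e] by simp
      also have "cinner (B (E \<xi>)) (E (dg Y \<eta>)) = cinner (B (E \<xi>)) (dg Y \<eta>)"
        by (rule innerK[OF BK, symmetric]) simp
      finally show "cinner (G (Y \<xi>)) \<eta> = cinner (G \<xi>) (dg Y \<eta>)" by (simp add: G_def)
    qed
    have aD: "a \<in> D" and bD: "b \<in> D" using a b DE_sub_D by auto
    have aE: "E a = a" using a KE_iff by auto
    have XaK: "X a \<in> KE" using Ldag_into[OF R(1) a] a by (simp add: restr_in)
    have "cinner (B (restr DE X a)) b = cinner (G (X a)) b"
      using a XaK KE_iff by (simp add: restr_in G_def)
    also have "\<dots> = cinner (G a) (dg X b)" by (rule Xc[OF GW aD bD])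
    also have "\<dots> = cinner (B a) (dg X b)" using aE by (simp add: G_def)
    also have "\<dots> = cinner (B a) (E (dg X b))" by (rule innerK[OF BK]) (use a in auto)
    also have "\<dots> = cinner (B a) (rdg (restr DE X) b)" using bspec[OF R(2) b] by simp
    finally show ?thesis .
  qed
  thus ?thesis unfolding wsig_def using R(1) by blast
qed

end


context lctx begin

definition rep :: "('h \<Rightarrow> 'h) \<Rightarrow> 'h \<Rightarrow> 'h \<Rightarrow> bool" where
  "rep T v w \<longleftrightarrow> (\<exists>(n::nat) C \<xi> \<eta>. (\<forall>k<n. C k \<in> W \<and> \<xi> k \<in> D) \<and> \<eta> \<in> D
      \<and> v = (\<Sum>k<n. C k (E (\<xi> k))) + (\<eta> - Z \<eta>)
      \<and> w = (\<Sum>k<n. C k (T (E (\<xi> k)))))"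

abbreviation "EDOM \<equiv> ext_dom W E Z D"
abbreviation "ext \<equiv> ext_op W E Z D"

lemma ext_unfold: "ext T = restr EDOM (\<lambda>v. SOME w. rep T v w)"
  unfolding ext_op_def rep_def by (rule refl)

lemma repE:
  assumes "rep T v w"
  obtains n :: nat and C \<xi> \<eta> where "\<forall>k<n. C k \<in> W \<and> \<xi> k \<in> D" "\<eta> \<in> D"
    "v = (\<Sum>k<n. C k (E (\<xi> k))) + (\<eta> - Z \<eta>)" "w = (\<Sum>k<n. C k (T (E (\<xi> k))))"
  using assms unfolding rep_def by blast

lemma repI:
  assumes "\<forall>k<n. C k \<in> W \<and> \<xi> k \<in> D" "\<eta> \<in> D"
  shows "rep T ((\<Sum>k<(n::nat). C k (E (\<xi> k))) + (\<eta> - Z \<eta>)) (\<Sum>k<n. C k (T (E (\<xi> k))))"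
  unfolding rep_def using assms by blast

lemma rep_dom: assumes "rep T v w" shows "v \<in> EDOM"
proof -
  obtain n :: nat and C \<xi> \<eta> where h: "\<forall>k<n. C k \<in> W \<and> \<xi> k \<in> D" "\<eta> \<in> D"
    "v = (\<Sum>k<n. C k (E (\<xi> k))) + (\<eta> - Z \<eta>)" "w = (\<Sum>k<n. C k (T (E (\<xi> k))))"
    by (rule repE[OF assms])
  have "(\<Sum>k<n. scaleC ((\<lambda>_. 1) k) ((\<lambda>k. C k (E (\<xi> k))) k)) \<in> cspan {C (E \<xi>) | C \<xi>. C \<in> W \<and> \<xi> \<in> D}"
    by (rule cspan_intro) (use h(1) in blast)
  hence "(\<Sum>k<n. C k (E (\<xi> k))) \<in> cspan {C (E \<xi>) | C \<xi>. C \<in> W \<and> \<xi> \<in> D}" by (simp add: scaleC_one)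
  thus ?thesis unfolding ext_dom_def using h(2,3) by blast
qed

lemma dom_rep: assumes "v \<in> EDOM" shows "\<exists>w. rep T v w"
proof -
  obtain u \<eta> where u: "v = u + (\<eta> - Z \<eta>)" "u \<in> cspan {C (E \<xi>) | C \<xi>. C \<in> W \<and> \<xi> \<in> D}" "\<eta> \<in> D"
    using assms unfolding ext_dom_def by blast
  obtain n :: nat and c vv where vv: "\<forall>k<n. vv k \<in> {C (E \<xi>) | C \<xi>. C \<in> W \<and> \<xi> \<in> D}"
    "u = (\<Sum>k<n. scaleC (c k) (vv k))" using cspan_elim[OF u(2)] by blast
  have ex: "\<forall>k\<in>{..<n}. \<exists>p. fst p \<in> W \<and> snd p \<in> D \<and> vv k = fst p (E (snd p))"
  proof
    fix k assume "k \<in> {..<n}"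
    hence "k < n" by simp
    hence "vv k \<in> {C (E \<xi>) | C \<xi>. C \<in> W \<and> \<xi> \<in> D}" using vv(1) by blast
    then obtain C \<xi> where "C \<in> W" "\<xi> \<in> D" "vv k = C (E \<xi>)" by blast
    thus "\<exists>p. fst p \<in> W \<and> snd p \<in> D \<and> vv k = fst p (E (snd p))" by (intro exI[of _ "(C, \<xi>)"]) simp
  qed
  obtain g where g: "\<forall>k\<in>{..<n}. fst (g k) \<in> W \<and> snd (g k) \<in> D \<and> vv k = fst (g k) (E (snd (g k)))"
    using bchoice[OF ex] by blast
  define CC where "CC k = (\<lambda>x. scaleC (c k) (fst (g k) x))" for k
  define XX where "XX k = snd (g k)" for k
  have CW: "\<forall>k<n. CC k \<in> W \<and> XX k \<in> D"
  proof (intro allI impI conjI)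
    fix k assume "k < n"
    hence gk: "fst (g k) \<in> W" "snd (g k) \<in> D" using g by auto
    show "CC k \<in> W" unfolding CC_def by (rule W_scale[OF gk(1)])
    show "XX k \<in> D" unfolding XX_def by (rule gk(2))
  qed
  have "u = (\<Sum>k<n. CC k (E (XX k)))" unfolding vv(2) CC_def XX_def using g by (intro sum.cong) auto
  hence "rep T v (\<Sum>k<n. CC k (T (E (XX k))))" using repI[OF CW u(3), of T] u(1) by simp
  thus ?thesis by blast
qed

lemma rep_ext: assumes "v \<in> EDOM" shows "rep T v (ext T v)"
proof -
  have "ext T v = (SOME w. rep T v w)" using assms by (simp add: ext_unfold restr_in)
  thus ?thesis using someI_ex[OF dom_rep[OF assms]] by simp
qed

lemma rep_rZ: assumes T: "T \<in> RS" and r: "rep T v w" shows "w \<in> range Z"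
proof -
  obtain n :: nat and C \<xi> \<eta> where h0: "\<forall>k<n. C k \<in> W \<and> \<xi> k \<in> D" "\<eta> \<in> D"
    "v = (\<Sum>k<n. C k (E (\<xi> k))) + (\<eta> - Z \<eta>)" "w = (\<Sum>k<n. C k (T (E (\<xi> k))))"
    by (rule repE[OF r])
  note h = h0(1) h0(4)
  have "C k (T (E (\<xi> k))) \<in> range Z" if k: "k < n" for k
  proof -
    have "T (E (\<xi> k)) \<in> KE" using RS_K[OF T] h(1) k by blast
    hence eq: "E (T (E (\<xi> k))) = T (E (\<xi> k))" using KE_iff by blast
    have "C k (E (T (E (\<xi> k)))) \<in> range Z" using SS_rZ[of "C k" "T (E (\<xi> k))"] h(1) k by blast
    thus ?thesis unfolding eq .
  qed
  hence all: "\<forall>k\<in>{..<n}. C k (T (E (\<xi> k))) \<in> range Z" by blast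
  show ?thesis unfolding h(2) by (rule rZ_sum[OF all])
qed

lemma rep_u_rZ: assumes r: "rep T v w" obtains u \<eta> where "u \<in> range Z" "\<eta> \<in> D" "v = u + (\<eta> - Z \<eta>)"
proof -
  obtain n :: nat and C \<xi> \<eta> where h: "\<forall>k<n. C k \<in> W \<and> \<xi> k \<in> D" "\<eta> \<in> D" "v = (\<Sum>k<n. C k (E (\<xi> k))) + (\<eta> - Z \<eta>)"
    "w = (\<Sum>k<n. C k (T (E (\<xi> k))))"
    by (rule repE[OF r])
  have all: "\<forall>k\<in>{..<n}. C k (E (\<xi> k)) \<in> range Z"
  proof
    fix k assume "k \<in> {..<n}" thus "C k (E (\<xi> k)) \<in> range Z" using SS_rZ[of "C k" "\<xi> k"] h(1) by blast
  qed
  have "(\<Sum>k<n. C k (E (\<xi> k))) \<in> range Z" by (rule rZ_sum[OF all])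
  thus ?thesis using that h(2,3) by blast
qed

lemma EIP:
  assumes T: "T \<in> RS" and r1: "rep T u w" and r2: "rep (rdg T) v w'"
  shows "cinner w v = cinner u w'"
proof -
  have T': "rdg T \<in> RS" by (rule RS_dag[OF T])
  obtain n :: nat and C \<xi> a where h: "\<forall>k<n. C k \<in> W \<and> \<xi> k \<in> D" "a \<in> D"
    "u = (\<Sum>k<n. C k (E (\<xi> k))) + (a - Z a)" "w = (\<Sum>k<n. C k (T (E (\<xi> k))))"
    by (rule repE[OF r1])
  obtain m :: nat and C' \<zeta> b where h': "\<forall>j<m. C' j \<in> W \<and> \<zeta> j \<in> D" "b \<in> D"
    "v = (\<Sum>j<m. C' j (E (\<zeta> j))) + (b - Z b)" "w' = (\<Sum>j<m. C' j (rdg T (E (\<zeta> j))))"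
    by (rule repE[OF r2])
  have wZ: "w \<in> range Z" by (rule rep_rZ[OF T r1])
  have wZ': "w' \<in> range Z" by (rule rep_rZ[OF T' r2])
  have "cinner w v = cinner w (\<Sum>j<m. C' j (E (\<zeta> j))) + cinner w (b - Z b)"
    unfolding h'(3) by (rule cinner_add_right)
  also have "cinner w (b - Z b) = 0" by (rule orthZ[OF wZ])
  also have "cinner w (\<Sum>j<m. C' j (E (\<zeta> j))) = (\<Sum>k<n. \<Sum>j<m. cinner (C k (T (E (\<xi> k)))) (C' j (E (\<zeta> j))))"
    unfolding h(4) by (subst cinner_sum_left) (simp only: cinner_sum_right)
  also have "\<dots> = (\<Sum>k<n. \<Sum>j<m. cinner (C k (E (\<xi> k))) (C' j (rdg T (E (\<zeta> j)))))"
  proof (rule sum.cong[OF refl], rule sum.cong[OF refl])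
    fix k j assume "k \<in> {..<n}" "j \<in> {..<m}"
    thus "cinner (C k (T (E (\<xi> k)))) (C' j (E (\<zeta> j))) = cinner (C k (E (\<xi> k))) (C' j (rdg T (E (\<zeta> j))))"
      using IP[OF T] h(1) h'(1) by auto
  qed
  also have "\<dots> = cinner (\<Sum>k<n. C k (E (\<xi> k))) w'"
    unfolding h'(4) by (subst cinner_sum_left) (simp only: cinner_sum_right)
  also have "\<dots> = cinner u w'"
  proof -
    have "cinner u w' = cinner (\<Sum>k<n. C k (E (\<xi> k))) w' + cinner (a - Z a) w'"
      unfolding h(3) by (rule cinner_add_left)
    also have "cinner (a - Z a) w' = 0" by (rule orthZ'[OF wZ'])
    finally show ?thesis by simp
  qed
  finally show ?thesis by simp
qed

lemma D0: "0 \<in> D" by (rule csubspace_zero[OF D_subspace])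

lemma rep_single: assumes C: "C \<in> W" and x: "x \<in> D" shows "rep T (C (E x)) (C (T (E x)))"
proof -
  have "rep T ((\<Sum>k<(1::nat). (\<lambda>_. C) k (E ((\<lambda>_. x) k))) + (0 - Z 0)) (\<Sum>k<(1::nat). (\<lambda>_. C) k (T (E ((\<lambda>_. x) k))))"
    by (rule repI) (use C x D0 in auto)
  thus ?thesis using BopU_zero[OF Z_Bop] by simp
qed

lemma WD: assumes T: "T \<in> RS" and r1: "rep T v w1" and r2: "rep T v w2" shows "w1 = w2"
proof -
  have T': "rdg T \<in> RS" by (rule RS_dag[OF T])
  have "w1 - w2 = 0"
  proof (rule DS)
    show "w1 - w2 \<in> range Z" using rep_rZ[OF T r1] rep_rZ[OF T r2] by (rule csubspace_diff[OF rZ_sub])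
    show "\<forall>C\<in>W. \<forall>x\<in>D. cinner (w1 - w2) (C (E x)) = 0"
    proof (intro ballI)
      fix C x assume C: "C \<in> W" and x: "x \<in> D"
      have r: "rep (rdg T) (C (E x)) (C (rdg T (E x)))" by (rule rep_single[OF C x])
      have "cinner w1 (C (E x)) = cinner v (C (rdg T (E x)))" by (rule EIP[OF T r1 r])
      moreover have "cinner w2 (C (E x)) = cinner v (C (rdg T (E x)))" by (rule EIP[OF T r2 r])
      ultimately show "cinner (w1 - w2) (C (E x)) = 0" by (simp add: cinner_diff_left)
    qed
  qed
  thus ?thesis by simp
qed

lemma ext_eq_rep: assumes T: "T \<in> RS" and r: "rep T v w" shows "ext T v = w"
  using WD[OF T rep_ext[OF rep_dom[OF r]] r] .

lemma EIP2: assumes T: "T \<in> RS" and u: "u \<in> EDOM" and v: "v \<in> EDOM"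
  shows "cinner (ext T u) v = cinner u (ext (rdg T) v)"
  by (rule EIP[OF T rep_ext[OF u] rep_ext[OF v]])

lemma SS_EDOM: "C \<in> W \<Longrightarrow> x \<in> D \<Longrightarrow> C (E x) \<in> EDOM"
  using rep_dom[OF rep_single] by blast

end


context lctx begin

definition chr :: "('h \<Rightarrow> 'h) \<Rightarrow> 'h \<Rightarrow> 'h \<Rightarrow> bool" where
  "chr T \<xi> L \<longleftrightarrow> L \<in> range Z \<and> (\<forall>v\<in>EDOM. cinner L v = cinner \<xi> (ext (rdg T) v))"

lemma CU: assumes T: "T \<in> RS" and c1: "chr T \<xi> L1" and c2: "chr T \<xi> L2" shows "L1 = L2"
proof -
  have "L1 - L2 = 0"
  proof (rule DS)
    show "L1 - L2 \<in> range Z" using c1 c2 unfolding chr_def by (blast intro: csubspace_diff[OF rZ_sub])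
    show "\<forall>C\<in>W. \<forall>x\<in>D. cinner (L1 - L2) (C (E x)) = 0"
    proof (intro ballI)
      fix C x assume C: "C \<in> W" and x: "x \<in> D"
      have v: "C (E x) \<in> EDOM" by (rule SS_EDOM[OF C x])
      have "cinner L1 (C (E x)) = cinner \<xi> (ext (rdg T) (C (E x)))" using c1 v unfolding chr_def by blast
      moreover have "cinner L2 (C (E x)) = cinner \<xi> (ext (rdg T) (C (E x)))" using c2 v unfolding chr_def by blast
      ultimately show "cinner (L1 - L2) (C (E x)) = 0" by (simp add: cinner_diff_left)
    qed
  qed
  thus ?thesis by simp
qed

lemma GL:
  assumes T: "T \<in> RS" and s: "\<forall>n. s n \<in> EDOM" "s \<longlonglongrightarrow> \<xi>" and l: "(\<lambda>n. ext T (s n)) \<longlonglongrightarrow> L"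
  shows "chr T \<xi> L"
  unfolding chr_def
proof (intro conjI ballI)
  have "\<And>n. ext T (s n) \<in> range Z" using rep_rZ[OF T rep_ext] s(1) by blast
  thus "L \<in> range Z" using closed_sequentially[OF rZ_closed _ l] by blast
  fix v assume v: "v \<in> EDOM"
  have 1: "(\<lambda>n. cinner (ext T (s n)) v) \<longlonglongrightarrow> cinner L v" by (rule tendsto_cinner_left[OF l])
  have 2: "(\<lambda>n. cinner (s n) (ext (rdg T) v)) \<longlonglongrightarrow> cinner \<xi> (ext (rdg T) v)" by (rule tendsto_cinner_left[OF s(2)])
  have "(\<lambda>n. cinner (ext T (s n)) v) = (\<lambda>n. cinner (s n) (ext (rdg T) v))"
  proof
    fix n show "cinner (ext T (s n)) v = cinner (s n) (ext (rdg T) v)" using EIP2[OF T _ v] s(1) by blast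
  qed
  hence "(\<lambda>n. cinner (ext T (s n)) v) \<longlonglongrightarrow> cinner \<xi> (ext (rdg T) v)" using 2 by simp
  thus "cinner L v = cinner \<xi> (ext (rdg T) v)" using 1 LIMSEQ_unique by blast
qed

lemma seq_ex: assumes T: "T \<in> RS" and x: "\<xi> \<in> D"
  shows "\<exists>s L. (\<forall>n. s n \<in> EDOM) \<and> s \<longlonglongrightarrow> \<xi> \<and> (\<lambda>n. ext T (s n)) \<longlonglongrightarrow> L"
proof -
  have "\<xi> \<in> (\<Inter>X\<in>RS. cldom EDOM (ext X))" using ext_full x by simp
  hence "\<xi> \<in> cldom EDOM (ext T)" using T by blast
  then obtain s where s: "\<forall>n. s n \<in> EDOM" "s \<longlonglongrightarrow> \<xi>" "convergent (\<lambda>n. ext T (s n))"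
    unfolding cldom_def by blast
  then obtain L where "(\<lambda>n. ext T (s n)) \<longlonglongrightarrow> L" unfolding convergent_def by blast
  thus ?thesis using s by blast
qed

definition Xc :: "('h \<Rightarrow> 'h) \<Rightarrow> 'h \<Rightarrow> 'h" where
  "Xc T = restr D (\<lambda>\<xi>. THE L. chr T \<xi> L)"

lemma Xc_unique: assumes T: "T \<in> RS" and x: "\<xi> \<in> D" and c: "chr T \<xi> L" shows "Xc T \<xi> = L"
proof -
  have "(THE L. chr T \<xi> L) = L"
  proof (rule the_equality)
    show "chr T \<xi> L" by (rule c)
    fix L' assume "chr T \<xi> L'" thus "L' = L" by (rule CU[OF T _ c])
  qed
  thus ?thesis unfolding Xc_def using x by (simp add: restr_in)
qed

lemma Xc_seq: assumes T: "T \<in> RS" and x: "\<xi> \<in> D"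
  shows "\<exists>s. (\<forall>n. s n \<in> EDOM) \<and> s \<longlonglongrightarrow> \<xi> \<and> (\<lambda>n. ext T (s n)) \<longlonglongrightarrow> Xc T \<xi>"
proof -
  obtain s L where s: "\<forall>n. s n \<in> EDOM" "s \<longlonglongrightarrow> \<xi>" "(\<lambda>n. ext T (s n)) \<longlonglongrightarrow> L" using seq_ex[OF T x] by blast
  have "Xc T \<xi> = L" by (rule Xc_unique[OF T x GL[OF T s]])
  thus ?thesis using s by blast
qed

lemma Xc_chr: assumes T: "T \<in> RS" and x: "\<xi> \<in> D" shows "chr T \<xi> (Xc T \<xi>)"
proof -
  obtain s L where s: "\<forall>n. s n \<in> EDOM" "s \<longlonglongrightarrow> \<xi>" "(\<lambda>n. ext T (s n)) \<longlonglongrightarrow> L" using seq_ex[OF T x] by blast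
  have c: "chr T \<xi> L" by (rule GL[OF T s])
  have "Xc T \<xi> = L" by (rule Xc_unique[OF T x c])
  thus ?thesis using c by simp
qed

lemma Xc_T: assumes T: "T \<in> RS" and a: "a \<in> DE" shows "Xc T a = T a"
proof (rule Xc_unique[OF T])
  show aD: "a \<in> D" using a DE_sub_D by blast
  obtain a' where a': "a' \<in> D" "a = E a'" using a by blast
  have TK: "T a \<in> KE" by (rule RS_K[OF T a])
  hence eq: "E (T a) = T a" using KE_iff by blast
  have "(\<lambda>x. x) (E (T a)) \<in> range Z" by (rule SS_rZ[OF W_id])
  hence TZ: "T a \<in> range Z" unfolding eq by simp
  have r: "rep T ((\<lambda>x. x) (E a')) ((\<lambda>x. x) (T (E a')))" by (rule rep_single[OF W_id a'(1)])
  hence r': "rep T a (T a)" using a'(2) by simp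
  show "chr T a (T a)" unfolding chr_def
  proof (intro conjI ballI)
    show "T a \<in> range Z" by (rule TZ)
    fix v assume v: "v \<in> EDOM"
    show "cinner (T a) v = cinner a (ext (rdg T) v)" by (rule EIP[OF T r' rep_ext[OF v]])
  qed
qed

lemma Xc_add: assumes T: "T \<in> RS" and x: "x \<in> D" and y: "y \<in> D" shows "Xc T (x + y) = Xc T x + Xc T y"
proof (rule Xc_unique[OF T csubspace_add[OF D_subspace x y]])
  have c1: "chr T x (Xc T x)" by (rule Xc_chr[OF T x])
  have c2: "chr T y (Xc T y)" by (rule Xc_chr[OF T y])
  show "chr T (x + y) (Xc T x + Xc T y)" unfolding chr_def
  proof (intro conjI ballI)
    show "Xc T x + Xc T y \<in> range Z" using c1 c2 unfolding chr_def by (blast intro: csubspace_add[OF rZ_sub])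
    fix v assume v: "v \<in> EDOM"
    have "cinner (Xc T x) v = cinner x (ext (rdg T) v)" using c1 v unfolding chr_def by blast
    moreover have "cinner (Xc T y) v = cinner y (ext (rdg T) v)" using c2 v unfolding chr_def by blast
    ultimately show "cinner (Xc T x + Xc T y) v = cinner (x + y) (ext (rdg T) v)" by (simp add: cinner_add_left)
  qed
qed

lemma Xc_scale: assumes T: "T \<in> RS" and x: "x \<in> D" shows "Xc T (scaleC a x) = scaleC a (Xc T x)"
proof (rule Xc_unique[OF T csubspace_scaleC[OF D_subspace x]])
  have c1: "chr T x (Xc T x)" by (rule Xc_chr[OF T x])
  show "chr T (scaleC a x) (scaleC a (Xc T x))" unfolding chr_def
  proof (intro conjI ballI)
    show "scaleC a (Xc T x) \<in> range Z" using c1 unfolding chr_def by (blast intro: csubspace_scaleC[OF rZ_sub])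
    fix v assume v: "v \<in> EDOM"
    have "cinner (Xc T x) v = cinner x (ext (rdg T) v)" using c1 v unfolding chr_def by blast
    thus "cinner (scaleC a (Xc T x)) v = cinner (scaleC a x) (ext (rdg T) v)" by (simp add: cinner_scaleC_left)
  qed
qed

lemma Xc_adj: assumes T: "T \<in> RS" and x: "\<xi> \<in> D" and e: "\<eta> \<in> D"
  shows "cinner (Xc T \<xi>) \<eta> = cinner \<xi> (Xc (rdg T) \<eta>)"
proof -
  have T': "rdg T \<in> RS" by (rule RS_dag[OF T])
  have dd: "rdg (rdg T) = T" by (rule dag_dag[OF RS_Ldag[OF T] denseE])
  have c': "chr (rdg T) \<eta> (Xc (rdg T) \<eta>)" by (rule Xc_chr[OF T' e])
  hence c'': "\<forall>v\<in>EDOM. cinner (Xc (rdg T) \<eta>) v = cinner \<eta> (ext T v)" unfolding chr_def dd by blast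
  obtain s where s: "\<forall>n. s n \<in> EDOM" "s \<longlonglongrightarrow> \<xi>" "(\<lambda>n. ext T (s n)) \<longlonglongrightarrow> Xc T \<xi>"
    using Xc_seq[OF T x] by blast
  have 1: "(\<lambda>n. cinner (ext T (s n)) \<eta>) \<longlonglongrightarrow> cinner (Xc T \<xi>) \<eta>" by (rule tendsto_cinner_left[OF s(3)])
  have 2: "(\<lambda>n. cnj (cinner (Xc (rdg T) \<eta>) (s n))) \<longlonglongrightarrow> cnj (cinner (Xc (rdg T) \<eta>) \<xi>)"
    by (rule tendsto_cnj[OF tendsto_cinner_right[OF s(2)]])
  have "(\<lambda>n. cinner (ext T (s n)) \<eta>) = (\<lambda>n. cnj (cinner (Xc (rdg T) \<eta>) (s n)))"
  proof
    fix n
    have "cinner (Xc (rdg T) \<eta>) (s n) = cinner \<eta> (ext T (s n))" using c'' s(1) by blast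
    thus "cinner (ext T (s n)) \<eta> = cnj (cinner (Xc (rdg T) \<eta>) (s n))" by (simp add: cinner_commute[of \<eta>])
  qed
  hence "(\<lambda>n. cinner (ext T (s n)) \<eta>) \<longlonglongrightarrow> cnj (cinner (Xc (rdg T) \<eta>) \<xi>)" using 2 by simp
  hence "cinner (Xc T \<xi>) \<eta> = cnj (cinner (Xc (rdg T) \<eta>) \<xi>)" using 1 LIMSEQ_unique by blast
  thus ?thesis by (simp add: cinner_commute[of \<xi>])
qed

lemma Xc_Ldag: assumes T: "T \<in> RS" shows "Xc T \<in> Ldag UNIV D"
proof (rule LdagI)
  show "\<forall>x. x \<notin> D \<longrightarrow> Xc T x = 0" unfolding Xc_def by (simp add: restr_out)
  show "\<forall>x\<in>D. Xc T x \<in> UNIV" by simp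
  show "\<forall>x\<in>D. \<forall>y\<in>D. Xc T (x + y) = Xc T x + Xc T y" using Xc_add[OF T] by blast
  show "\<forall>a. \<forall>x\<in>D. Xc T (scaleC a x) = scaleC a (Xc T x)" using Xc_scale[OF T] by blast
  show "\<forall>\<eta>\<in>D. \<exists>z\<in>UNIV. \<forall>\<xi>\<in>D. cinner (Xc T \<xi>) \<eta> = cinner \<xi> z" using Xc_adj[OF T] by blast
qed

lemma Xc_dg: assumes T: "T \<in> RS" and e: "\<eta> \<in> D" shows "dg (Xc T) \<eta> = Xc (rdg T) \<eta>"
  by (rule dag_unique[OF denseU e]) (use Xc_adj[OF T _ e] in auto)

lemma repC: assumes C: "C \<in> W" and r: "rep T v w" shows "rep T (C v) (C w)"
proof -
  have CB: "C \<in> Bop UNIV" by (rule W_Bop[OF C])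
  obtain n :: nat and CC \<xi> \<eta> where h: "\<forall>k<n. CC k \<in> W \<and> \<xi> k \<in> D" "\<eta> \<in> D"
    "v = (\<Sum>k<n. CC k (E (\<xi> k))) + (\<eta> - Z \<eta>)" "w = (\<Sum>k<n. CC k (T (E (\<xi> k))))"
    by (rule repE[OF r])
  define C2 where "C2 k = (\<lambda>x. C (CC k x))" for k
  have C2W: "\<forall>k<n. C2 k \<in> W \<and> \<xi> k \<in> D"
  proof (intro allI impI conjI)
    fix k assume k: "k < n"
    show "C2 k \<in> W" unfolding C2_def by (rule W_comp[OF C]) (use h(1) k in blast)
    show "\<xi> k \<in> D" using h(1) k by blast
  qed
  have Ce: "C \<eta> \<in> D" by (rule W_D[OF C h(2)])
  have "C v = (\<Sum>k<n. C2 k (E (\<xi> k))) + (C \<eta> - Z (C \<eta>))"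
    unfolding h(3) C2_def by (simp add: Bop_add[OF CB] BopU_sum[OF CB] BopU_diff[OF CB] Z_comm[OF C])
  moreover have "C w = (\<Sum>k<n. C2 k (T (E (\<xi> k))))"
    unfolding h(4) C2_def by (simp add: BopU_sum[OF CB])
  ultimately show ?thesis using repI[OF C2W Ce, of T] by simp
qed

lemma Xc_comm: assumes T: "T \<in> RS" and C: "C \<in> W" and x: "\<xi> \<in> D" shows "C (Xc T \<xi>) = Xc T (C \<xi>)"
proof -
  have CB: "C \<in> Bop UNIV" by (rule W_Bop[OF C])
  have T': "rdg T \<in> RS" by (rule RS_dag[OF T])
  have A: "adj C \<in> W" by (rule W_adj[OF C])
  have c: "chr T \<xi> (Xc T \<xi>)" by (rule Xc_chr[OF T x])
  have "chr T (C \<xi>) (C (Xc T \<xi>))" unfolding chr_def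
  proof (intro conjI ballI)
    show "C (Xc T \<xi>) \<in> range Z" using Z_inv[OF C] c unfolding chr_def by blast
    fix v assume v: "v \<in> EDOM"
    have r: "rep (rdg T) (adj C v) (adj C (ext (rdg T) v))" by (rule repC[OF A rep_ext[OF v]])
    have av: "adj C v \<in> EDOM" by (rule rep_dom[OF r])
    have ev: "ext (rdg T) (adj C v) = adj C (ext (rdg T) v)" by (rule ext_eq_rep[OF T' r])
    have "cinner (C (Xc T \<xi>)) v = cinner (Xc T \<xi>) (adj C v)" by (rule adj[OF CB])
    also have "\<dots> = cinner \<xi> (ext (rdg T) (adj C v))" using c av unfolding chr_def by blast
    also have "\<dots> = cinner \<xi> (adj C (ext (rdg T) v))" by (simp only: ev)
    also have "\<dots> = cinner (C \<xi>) (ext (rdg T) v)" by (rule adj[OF CB, symmetric])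
    finally show "cinner (C (Xc T \<xi>)) v = cinner (C \<xi>) (ext (rdg T) v)" .
  qed
  thus ?thesis by (rule Xc_unique[OF T W_D[OF C x], symmetric])
qed

lemma Xc_wsig: assumes T: "T \<in> RS" shows "Xc T \<in> wsig UNIV D M"
  unfolding wsig_def
proof (intro CollectI conjI ballI)
  show "Xc T \<in> Ldag UNIV D" by (rule Xc_Ldag[OF T])
  fix C \<xi> \<eta> assume C: "C \<in> W" and x: "\<xi> \<in> D" and e: "\<eta> \<in> D"
  have "cinner (C (Xc T \<xi>)) \<eta> = cinner (Xc T (C \<xi>)) \<eta>" by (simp only: Xc_comm[OF T C x])
  also have "\<dots> = cinner (C \<xi>) (Xc (rdg T) \<eta>)" by (rule Xc_adj[OF T W_D[OF C x] e])
  also have "\<dots> = cinner (C \<xi>) (dg (Xc T) \<eta>)" by (simp only: Xc_dg[OF T e])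
  finally show "cinner (C (Xc T \<xi>)) \<eta> = cinner (C \<xi>) (dg (Xc T) \<eta>)" .
qed

lemma Xc_restr: assumes T: "T \<in> RS" shows "restr DE (Xc T) = T"
proof
  fix x show "restr DE (Xc T) x = T x"
  proof (cases "x \<in> DE")
    case True thus ?thesis by (simp add: restr_in Xc_T[OF T])
  next
    case False thus ?thesis by (simp add: restr_out Ldag_out[OF RS_Ldag[OF T]])
  qed
qed

theorem main: "reduce E D (wsig UNIV D M) = RS"
proof
  show "reduce E D (wsig UNIV D M) \<subseteq> RS"
  proof
    fix Y assume "Y \<in> reduce E D (wsig UNIV D M)"
    then obtain X where X: "X \<in> wsig UNIV D M" "Y = restr DE X"
      unfolding reduce_def[of E D "wsig UNIV D M"] by blast
    show "Y \<in> RS" unfolding X(2) by (rule dir1[OF X(1)])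
  qed
  show "RS \<subseteq> reduce E D (wsig UNIV D M)"
  proof
    fix T assume T: "T \<in> RS"
    have eq: "T = restr DE (Xc T)" by (rule Xc_restr[OF T, symmetric])
    show "T \<in> reduce E D (wsig UNIV D M)" unfolding reduce_def[of E D "wsig UNIV D M"]
      by (rule image_eqI[where f="restr DE" and x="Xc T", OF eq Xc_wsig[OF T]])
  qed
qed

end


theorem lemma3p1:
  fixes D :: "'h::chilbert_space set"
    and M :: "('h \<Rightarrow> 'h) set"
    and E Z :: "'h \<Rightarrow> 'h"
  assumes D_subspace: "csubspace D"
    and D_dense: "closure D = UNIV"
    and M_Ostar: "Ostar_space UNIV D M"
    and M_fully_closed: "fully_closed D M"
    and comm_inv: "\<forall>C\<in>wcomm UNIV D M. C ` D \<subseteq> D"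
    and E_comm: "E \<in> wcomm UNIV D M"
    and E_proj: "is_proj E"
    and Z_proj: "is_proj Z"
    and Z_range: "range Z = closure (cspan {C (E x) | C x. C \<in> wcomm UNIV D M})"
    and ext_full: "(\<Inter>X\<in>wsig (range E) (E ` D) (reduce E D M).
         cldom (ext_dom (wcomm UNIV D M) E Z D) (ext_op (wcomm UNIV D M) E Z D X)) = D"
  shows "reduce E D (wsig UNIV D M) = wsig (range E) (E ` D) (reduce E D M)"
  proof -
  interpret lctx D M E Z
    by (unfold_locales; fact D_subspace D_dense M_Ostar comm_inv E_comm E_proj Z_proj Z_range ext_full)
  show ?thesis by (rule main)
qed

end
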